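(* Let $A$ be an approximately unital Banach algebra such that ${\mathfrak r}_A$ is weak* dense in ${\mathfrak r}_{A^{**}}$. Then $\{x\in{\mathfrak r}_A:\|x\|\le1\}$ is weak* dense in $\{\eta\in{\mathfrak r}_{A^{**}}:\|\eta\|\le1\}$. If in addition there exists a mixed identity of norm $1$ for $A^{**}$ lying in ${\mathfrak r}_{A^{**}}$, then $A$ has a contractive approximate identity in ${\mathfrak r}_A$.
   Context: Banach algebras are complex with submultiplicative norm; "unital" means identity of norm 1; approximately unital means having a contractive approximate identity. Multiplier unitization $A^1$: $A$ if unital, otherwise $A+\mathbb{C}1$ with $\|a+\lambda1\|=\sup\{\|ac+\lambda c\|:c\in A,\|c\|\le1\}$. ${\mathfrak r}_A=\{a:\mathrm{Re}\,\varphi(a)\ge0$ for all $\varphi\in(A^1)^*$ with $\|\varphi\|=\varphi(1)=1\}$. Biduals carry the second Arens product; $A^{**}\cong A^{\perp\perp}\subset(A^1)^{**}$; ${\mathfrak r}_{A^{**}}=A^{**}\cap{\mathfrak r}_{(A^1)^{**}}$, where ${\mathfrak r}_{(A^1)^{**}}$ is the set of elements of the unital algebra $(A^1)^{**}$ at which every state has nonnegative real part. A mixed identity for $A^{**}$ is an element that is a right identity for the first Arens product and a left identity for the second Arens product. *)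

theory Defs
  imports "HOL-Analysis.Analysis"
begin

text \<open>A complex Banach algebra is modelled as a type of class real_normed_algebra
  and banach (associative, submultiplicative norm, complete; no unit required)
  together with a map J (multiplication by the imaginary unit).\<close>

definition cscale :: "('a::real_vector \<Rightarrow> 'a) \<Rightarrow> complex \<Rightarrow> 'a \<Rightarrow> 'a" where
  "cscale J c x = Re c *\<^sub>R x + Im c *\<^sub>R J x"

definition complex_structure :: "('a::real_normed_algebra \<Rightarrow> 'a) \<Rightarrow> bool" where
  "complex_structure J \<longleftrightarrow> linear J \<and> (\<forall>x. J (J x) = - x)
     \<and> (\<forall>x y. J (x * y) = J x * y \<and> J (x * y) = x * J y)
     \<and> (\<forall>c x. norm (cscale J c x) = cmod c * norm x)"

record 'v cspace =
  carr :: "'v set"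
  addv :: "'v \<Rightarrow> 'v \<Rightarrow> 'v"
  smulv :: "complex \<Rightarrow> 'v \<Rightarrow> 'v"
  nrm :: "'v \<Rightarrow> real"

definition dual :: "'v cspace \<Rightarrow> ('v \<Rightarrow> complex) cspace" where
  "dual S = \<lparr> carr = {f. (\<forall>x\<in>carr S. \<forall>y\<in>carr S. f (addv S x y) = f x + f y)
                      \<and> (\<forall>c. \<forall>x\<in>carr S. f (smulv S c x) = c * f x)
                      \<and> (\<exists>K. \<forall>x\<in>carr S. cmod (f x) \<le> K * nrm S x)
                      \<and> (\<forall>x. x \<notin> carr S \<longrightarrow> f x = 0)},
             addv = (\<lambda>f g x. f x + g x),
             smulv = (\<lambda>c f x. c * f x),
             nrm = (\<lambda>f. Sup {cmod (f x) | x. x \<in> carr S \<and> nrm S x \<le> 1}) \<rparr>"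

definition canon :: "'v cspace \<Rightarrow> 'v \<Rightarrow> (('v \<Rightarrow> complex) \<Rightarrow> complex)" where
  "canon S x = (\<lambda>f. if f \<in> carr (dual S) then f x else 0)"

text \<open>Weak* density in a dual space X = dual S: D is weak* dense in E if every
  element of E lies in the weak* closure of D (basic weak* neighbourhoods).\<close>
definition wstar_dense :: "'v cspace \<Rightarrow> ('v \<Rightarrow> complex) set \<Rightarrow> ('v \<Rightarrow> complex) set \<Rightarrow> bool" where
  "wstar_dense S D E \<longleftrightarrow> (\<forall>\<Phi>\<in>E. \<forall>F. finite F \<and> F \<subseteq> carr S \<longrightarrow>
      (\<forall>\<epsilon>>0. \<exists>d\<in>D. \<forall>x\<in>F. cmod (d x - \<Phi> x) < \<epsilon>))"

definition Aspace :: "('a::real_normed_algebra \<Rightarrow> 'a) \<Rightarrow> 'a cspace" where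
  "Aspace J = \<lparr> carr = UNIV, addv = (+), smulv = cscale J, nrm = norm \<rparr>"

definition is_identity :: "'a::real_normed_algebra \<Rightarrow> bool" where
  "is_identity e \<longleftrightarrow> (\<forall>x. e * x = x \<and> x * e = x) \<and> norm e = 1"

definition unital_alg :: "'a::real_normed_algebra itself \<Rightarrow> bool" where
  "unital_alg _ \<longleftrightarrow> (\<exists>e::'a. is_identity e)"

definition approx_unital :: "'a::real_normed_algebra itself \<Rightarrow> bool" where
  "approx_unital _ \<longleftrightarrow> (\<exists>F :: 'a filter. F \<noteq> bot \<and> eventually (\<lambda>x. norm x \<le> 1) F \<and>
      (\<forall>a. ((\<lambda>x. x * a) \<longlongrightarrow> a) F \<and> ((\<lambda>x. a * x) \<longlongrightarrow> a) F))"

text \<open>Multiplier unitization A^1, realised on 'a \<times> complex: if A is unital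
  the carrier is A \<times> {0} (i.e. A^1 = A), otherwise A + C1 with the multiplier norm.\<close>
definition unitz :: "('a::real_normed_algebra \<Rightarrow> 'a) \<Rightarrow> ('a \<times> complex) cspace" where
  "unitz J = \<lparr> carr = (if unital_alg TYPE('a) then {p. snd p = 0} else UNIV),
               addv = (\<lambda>(a, l) (b, m). (a + b, l + m)),
               smulv = (\<lambda>c (a, l). (cscale J c a, c * l)),
               nrm = (\<lambda>(a, l). if unital_alg TYPE('a) then norm a
                        else Sup {norm (a * c + cscale J l c) | c. norm c \<le> 1}) \<rparr>"

definition unitz_one :: "'a::real_normed_algebra itself \<Rightarrow> 'a \<times> complex" where
  "unitz_one _ = (if unital_alg TYPE('a) then (SOME e. is_identity e, 0) else (0, 1))"

definition states :: "'v cspace \<Rightarrow> 'v \<Rightarrow> ('v \<Rightarrow> complex) set" where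
  "states S u = {\<phi> \<in> carr (dual S). nrm (dual S) \<phi> = 1 \<and> \<phi> u = 1}"

definition rA :: "('a::real_normed_algebra \<Rightarrow> 'a) \<Rightarrow> 'a set" where
  "rA J = {a. \<forall>\<phi>\<in>states (unitz J) (unitz_one TYPE('a)). 0 \<le> Re (\<phi> (a, 0))}"

text \<open>r of the unital algebra (A^1)**, whose identity is the canonical image of 1.\<close>
definition rA1bidual :: "('a::real_normed_algebra \<Rightarrow> 'a)
     \<Rightarrow> ((('a \<times> complex) \<Rightarrow> complex) \<Rightarrow> complex) set" where
  "rA1bidual J = {\<eta> \<in> carr (dual (dual (unitz J))).
      \<forall>\<psi>\<in>states (dual (dual (unitz J))) (canon (unitz J) (unitz_one TYPE('a))).
         0 \<le> Re (\<psi> \<eta>)}"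

text \<open>Identification of A** with A^{\<perp>\<perp>} in (A^1)** (second adjoint of the inclusion).\<close>
definition bidual_incl :: "('a::real_normed_algebra \<Rightarrow> 'a) \<Rightarrow> (('a \<Rightarrow> complex) \<Rightarrow> complex)
     \<Rightarrow> ((('a \<times> complex) \<Rightarrow> complex) \<Rightarrow> complex)" where
  "bidual_incl J \<Phi> = (\<lambda>\<phi>. if \<phi> \<in> carr (dual (unitz J)) then \<Phi> (\<lambda>a. \<phi> (a, 0)) else 0)"

definition rAbidual :: "('a::real_normed_algebra \<Rightarrow> 'a) \<Rightarrow> (('a \<Rightarrow> complex) \<Rightarrow> complex) set" where
  "rAbidual J = {\<Phi> \<in> carr (dual (dual (Aspace J))). bidual_incl J \<Phi> \<in> rA1bidual J}"

definition arens1 :: "('a::real_normed_algebra \<Rightarrow> 'a) \<Rightarrow> (('a \<Rightarrow> complex) \<Rightarrow> complex)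
     \<Rightarrow> (('a \<Rightarrow> complex) \<Rightarrow> complex) \<Rightarrow> (('a \<Rightarrow> complex) \<Rightarrow> complex)" where
  "arens1 J \<Phi> \<Psi> = (\<lambda>f. if f \<in> carr (dual (Aspace J))
       then \<Phi> (\<lambda>a. \<Psi> (\<lambda>b. f (a * b))) else 0)"

definition arens2 :: "('a::real_normed_algebra \<Rightarrow> 'a) \<Rightarrow> (('a \<Rightarrow> complex) \<Rightarrow> complex)
     \<Rightarrow> (('a \<Rightarrow> complex) \<Rightarrow> complex) \<Rightarrow> (('a \<Rightarrow> complex) \<Rightarrow> complex)" where
  "arens2 J \<Phi> \<Psi> = (\<lambda>f. if f \<in> carr (dual (Aspace J))
       then \<Psi> (\<lambda>a. \<Phi> (\<lambda>b. f (b * a))) else 0)"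

definition mixed_identity :: "('a::real_normed_algebra \<Rightarrow> 'a) \<Rightarrow> (('a \<Rightarrow> complex) \<Rightarrow> complex) \<Rightarrow> bool" where
  "mixed_identity J E \<longleftrightarrow> E \<in> carr (dual (dual (Aspace J))) \<and>
     (\<forall>\<Phi>\<in>carr (dual (dual (Aspace J))). arens1 J \<Phi> E = \<Phi> \<and> arens2 J E \<Phi> = \<Phi>)"

end

theory Submission
  imports Defs "HOL-Library.Function_Algebras"
begin

instantiation "fun" :: (type, real_vector) real_vector
begin
definition scaleR_fun :: "real \<Rightarrow> ('a \<Rightarrow> 'b) \<Rightarrow> 'a \<Rightarrow> 'b" where
  "scaleR_fun r f = (\<lambda>x. r *\<^sub>R f x)"
instance by standard (auto simp: scaleR_fun_def fun_eq_iff scaleR_add_right scaleR_add_left)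
end

lemma scaleR_fun_apply [simp]: "(r *\<^sub>R f) x = r *\<^sub>R f x"
  by (simp add: scaleR_fun_def)

definition hbgood :: "('v::real_vector \<Rightarrow> real) \<Rightarrow> ('v \<times> real) set \<Rightarrow> bool" where
  "hbgood p G \<longleftrightarrow> (\<forall>x y z. (x,y)\<in>G \<longrightarrow> (x,z)\<in>G \<longrightarrow> y = z) \<and> (0,0) \<in> G
     \<and> (\<forall>x y u w. (x,y)\<in>G \<longrightarrow> (u,w)\<in>G \<longrightarrow> (x+u, y+w)\<in>G)
     \<and> (\<forall>x y r. (x,y)\<in>G \<longrightarrow> (r *\<^sub>R x, r*y)\<in>G) \<and> (\<forall>x y. (x,y)\<in>G \<longrightarrow> y \<le> p x)"

lemma hbgoodD:
  assumes "hbgood p G"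
  shows "\<And>x y z. (x,y)\<in>G \<Longrightarrow> (x,z)\<in>G \<Longrightarrow> y = z" "(0,0) \<in> G"
    "\<And>x y u w. (x,y)\<in>G \<Longrightarrow> (u,w)\<in>G \<Longrightarrow> (x+u, y+w)\<in>G"
    "\<And>x y r. (x,y)\<in>G \<Longrightarrow> (r *\<^sub>R x, r*y)\<in>G" "\<And>x y. (x,y)\<in>G \<Longrightarrow> y \<le> p x"
  using assms unfolding hbgood_def by blast+

lemma hbgood_chain:
  assumes C: "C \<in> chains {G. hbgood p G}" and ne: "C \<noteq> {}"
  shows "hbgood p (\<Union>C)"
proof -
  have sub: "\<And>G. G \<in> C \<Longrightarrow> hbgood p G" using C by (auto simp: chains_def)
  have ch: "\<And>G H. G \<in> C \<Longrightarrow> H \<in> C \<Longrightarrow> G \<subseteq> H \<or> H \<subseteq> G"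
    using C by (auto simp: chains_def chain_subset_def)
  have two: "\<exists>K\<in>C. G \<subseteq> K \<and> H \<subseteq> K" if "G \<in> C" "H \<in> C" for G H
    using ch[OF that] that by blast
  show ?thesis unfolding hbgood_def
  proof (intro conjI allI impI)
    fix x y z assume "(x,y) \<in> \<Union>C" "(x,z) \<in> \<Union>C"
    then obtain G H where "G\<in>C" "H\<in>C" "(x,y)\<in>G" "(x,z)\<in>H" by auto
    then obtain K where "K\<in>C" "G \<subseteq> K" "H \<subseteq> K" using two by blast
    then show "y = z" using hbgoodD(1)[OF sub[of K]] \<open>(x,y)\<in>G\<close> \<open>(x,z)\<in>H\<close> by blast
  next
    obtain G where "G \<in> C" using ne by auto
    then show "(0,0) \<in> \<Union>C" using hbgoodD(2)[OF sub[of G]] by blast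
  next
    fix x y u w assume "(x,y) \<in> \<Union>C" "(u,w) \<in> \<Union>C"
    then obtain G H where "G\<in>C" "H\<in>C" "(x,y)\<in>G" "(u,w)\<in>H" by auto
    then obtain K where "K\<in>C" "G \<subseteq> K" "H \<subseteq> K" using two by blast
    then show "(x+u, y+w) \<in> \<Union>C" using hbgoodD(3)[OF sub[of K]] \<open>(x,y)\<in>G\<close> \<open>(u,w)\<in>H\<close> by blast
  next
    fix x y r assume "(x,y) \<in> \<Union>C"
    then show "(r *\<^sub>R x, r*y) \<in> \<Union>C" using hbgoodD(4)[OF sub] by blast
  next
    fix x y assume "(x,y) \<in> \<Union>C"
    then show "y \<le> p x" using hbgoodD(5)[OF sub] by blast
  qed
qed

lemma hbgood_extend:
  fixes p :: "'v::real_vector \<Rightarrow> real"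
  assumes sub: "\<And>x y. p (x + y) \<le> p x + p y"
    and hom: "\<And>r x. r > 0 \<Longrightarrow> p (r *\<^sub>R x) \<le> r * p x"
    and M: "hbgood p M" and x0: "x0 \<notin> Domain M"
  shows "\<exists>G. hbgood p G \<and> M \<subseteq> G \<and> G \<noteq> M"
proof -
  define D where "D = Domain M"
  define L where "L x = (THE y. (x,y) \<in> M)" for x
  have fnc: "\<And>x y z. (x,y)\<in>M \<Longrightarrow> (x,z)\<in>M \<Longrightarrow> y = z" using hbgoodD(1)[OF M] by blast
  have LM: "(x, L x) \<in> M" if xD: "x \<in> D" for x
  proof -
    obtain y where "(x,y)\<in>M" using xD by (auto simp: D_def)
    then show ?thesis unfolding L_def using fnc by (metis theI)
  qed
  have Leq: "L x = y" if "(x,y) \<in> M" for x y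
    using LM[of x] that fnc D_def by blast
  have D0: "0 \<in> D" using hbgoodD(2)[OF M] unfolding D_def by blast
  have Dadd: "x + u \<in> D" if "x \<in> D" "u \<in> D" for x u
  proof -
    have "(x + u, L x + L u) \<in> M" using hbgoodD(3)[OF M LM[OF that(1)] LM[OF that(2)]] .
    then show ?thesis unfolding D_def by blast
  qed
  have Dsc: "r *\<^sub>R x \<in> D" if "x \<in> D" for x r
  proof -
    have "(r *\<^sub>R x, r * L x) \<in> M" using hbgoodD(4)[OF M LM[OF that]] .
    then show ?thesis unfolding D_def by blast
  qed
  have Ladd: "L (x + u) = L x + L u" if "x \<in> D" "u \<in> D" for x u
  proof -
    have "(x + u, L x + L u) \<in> M" using hbgoodD(3)[OF M LM[OF that(1)] LM[OF that(2)]] .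
    then show ?thesis by (rule Leq)
  qed
  have Lsc: "L (r *\<^sub>R x) = r * L x" if "x \<in> D" for x r
  proof -
    have "(r *\<^sub>R x, r * L x) \<in> M" using hbgoodD(4)[OF M LM[OF that]] .
    then show ?thesis by (rule Leq)
  qed
  have Lp: "L x \<le> p x" if "x \<in> D" for x
    using hbgoodD(5)[OF M LM[OF that]] .
  have L0: "L 0 = 0" using Lsc[OF D0, of 0] by simp
  have key: "L m1 - p (m1 - x0) \<le> p (m2 + x0) - L m2" if "m1 \<in> D" "m2 \<in> D" for m1 m2
  proof -
    have "L m1 + L m2 = L (m1 + m2)" using Ladd that by simp
    also have "\<dots> \<le> p (m1 + m2)" using Lp Dadd that by simp
    also have "m1 + m2 = (m1 - x0) + (m2 + x0)" by simp
    also have "p \<dots> \<le> p (m1 - x0) + p (m2 + x0)" by (rule sub)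
    finally show ?thesis by simp
  qed
  define S where "S = {L m - p (m - x0) | m. m \<in> D}"
  define c where "c = Sup S"
  have Sne: "S \<noteq> {}" using D0 S_def by auto
  have Sbdd: "bdd_above S" unfolding S_def bdd_above_def using key[OF _ D0] by auto
  have c1: "L m - p (m - x0) \<le> c" if "m \<in> D" for m
    unfolding c_def by (rule cSup_upper[OF _ Sbdd]) (use that S_def in auto)
  have c2: "c \<le> p (m + x0) - L m" if "m \<in> D" for m
    unfolding c_def by (rule cSup_least[OF Sne]) (use that key S_def in auto)
  define G where "G = {(m + t *\<^sub>R x0, L m + t * c) | m t. m \<in> D}"
  have x0D: "x0 \<notin> D" using x0 D_def by simp
  have uniq: "m = m' \<and> t = t'" if "m \<in> D" "m' \<in> D" "m + t *\<^sub>R x0 = m' + t' *\<^sub>R x0" for m m' t t'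
  proof (cases "t = t'")
    case True then show ?thesis using that by simp
  next
    case False
    have "(t - t') *\<^sub>R x0 = m' - m" using that(3) by (simp add: algebra_simps)
    then have "(1 / (t - t')) *\<^sub>R ((t - t') *\<^sub>R x0) = (1 / (t - t')) *\<^sub>R (m' - m)" by simp
    then have "x0 = (1 / (t - t')) *\<^sub>R (m' - m)" using False by simp
    moreover have "m' - m \<in> D" using Dadd[OF that(2) Dsc[OF that(1), of "-1"]] by simp
    ultimately have "x0 \<in> D" using Dsc by simp
    then show ?thesis using x0D by simp
  qed
  have dom: "L m + t * c \<le> p (m + t *\<^sub>R x0)" if m: "m \<in> D" for m t
  proof -
    consider "t = 0" | "t > 0" | "t < 0" by linarith
    then show ?thesis
    proof cases
      case 1 then show ?thesis using Lp m by simp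
    next
      case 2
      have mD: "(1/t) *\<^sub>R m \<in> D" using Dsc m by simp
      have "c \<le> p ((1/t) *\<^sub>R m + x0) - L ((1/t) *\<^sub>R m)" using c2[OF mD] .
      then have "c + L m / t \<le> p ((1/t) *\<^sub>R m + x0)" using Lsc[OF m, of "1/t"] by simp
      then have "t * (c + L m / t) \<le> t * p ((1/t) *\<^sub>R m + x0)" by (rule mult_left_mono) (use 2 in simp)
      moreover have "t * (c + L m / t) = t*c + L m" using 2 by (simp add: distrib_left)
      ultimately have "t * c \<le> t * p ((1/t) *\<^sub>R m + x0) - L m" by linarith
      moreover have "p ((1/t) *\<^sub>R m + x0) \<le> (1/t) * p (m + t *\<^sub>R x0)"
        using hom[of "1/t" "m + t *\<^sub>R x0"] 2 by (simp add: algebra_simps)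
      then have "t * p ((1/t) *\<^sub>R m + x0) \<le> t * ((1/t) * p (m + t *\<^sub>R x0))"
        by (rule mult_left_mono) (use 2 in simp)
      then have "t * p ((1/t) *\<^sub>R m + x0) \<le> p (m + t *\<^sub>R x0)" using 2 by simp
      ultimately show ?thesis by simp
    next
      case 3
      define s where "s = - t"
      have s: "s > 0" using 3 s_def by simp
      have mD: "(1/s) *\<^sub>R m \<in> D" using Dsc m by simp
      have "L ((1/s) *\<^sub>R m) - p ((1/s) *\<^sub>R m - x0) \<le> c" using c1[OF mD] .
      then have "(1/s) * L m - c \<le> p ((1/s) *\<^sub>R m - x0)" using Lsc[OF m, of "1/s"] by simp
      then have "s * ((1/s) * L m - c) \<le> s * p ((1/s) *\<^sub>R m - x0)" by (rule mult_left_mono) (use s in simp)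
      moreover have "s * ((1/s) * L m - c) = L m - s * c" using s by (simp add: right_diff_distrib)
      ultimately have A: "L m - s * c \<le> s * p ((1/s) *\<^sub>R m - x0)" by simp
      have "p ((1/s) *\<^sub>R m - x0) \<le> (1/s) * p (m - s *\<^sub>R x0)"
        using hom[of "1/s" "m - s *\<^sub>R x0"] s by (simp add: algebra_simps)
      then have "s * p ((1/s) *\<^sub>R m - x0) \<le> s * ((1/s) * p (m - s *\<^sub>R x0))"
        by (rule mult_left_mono) (use s in simp)
      then have "s * p ((1/s) *\<^sub>R m - x0) \<le> p (m - s *\<^sub>R x0)" using s by simp
      with A show ?thesis using s_def by simp
    qed
  qed
  have "hbgood p G" unfolding hbgood_def
  proof (intro conjI allI impI)
    fix x y z assume "(x,y) \<in> G" "(x,z) \<in> G"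
    obtain m t where "m \<in> D" "x = m + t *\<^sub>R x0" "y = L m + t * c"
      using \<open>(x,y) \<in> G\<close> unfolding G_def by blast
    moreover obtain m' t' where "m' \<in> D" "x = m' + t' *\<^sub>R x0" "z = L m' + t' * c"
      using \<open>(x,z) \<in> G\<close> unfolding G_def by blast
    ultimately show "y = z" using uniq by metis
  next
    have "(0 + 0 *\<^sub>R x0, L 0 + 0 * c) \<in> G" unfolding G_def using D0 by blast
    then show "(0,0) \<in> G" using L0 by simp
  next
    fix x y u w assume "(x,y) \<in> G" "(u,w) \<in> G"
    obtain m t where "m \<in> D" "x = m + t *\<^sub>R x0" "y = L m + t * c"
      using \<open>(x,y) \<in> G\<close> unfolding G_def by blast
    moreover obtain m' t' where "m' \<in> D" "u = m' + t' *\<^sub>R x0" "w = L m' + t' * c"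
      using \<open>(u,w) \<in> G\<close> unfolding G_def by blast
    moreover have "((m + m') + (t + t') *\<^sub>R x0, L (m + m') + (t + t') * c) \<in> G"
      unfolding G_def using Dadd \<open>m \<in> D\<close> \<open>m' \<in> D\<close> by blast
    ultimately show "(x+u, y+w) \<in> G" using Ladd by (simp add: algebra_simps)
  next
    fix x y r assume "(x,y) \<in> G"
    then obtain m t where "m \<in> D" "x = m + t *\<^sub>R x0" "y = L m + t * c" unfolding G_def by blast
    moreover have "(r *\<^sub>R m + (r * t) *\<^sub>R x0, L (r *\<^sub>R m) + (r * t) * c) \<in> G"
      unfolding G_def using Dsc \<open>m \<in> D\<close> by blast
    ultimately show "(r *\<^sub>R x, r*y) \<in> G" using Lsc by (simp add: algebra_simps)
  next
    fix x y assume "(x,y) \<in> G"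
    then obtain m t where "m \<in> D" "x = m + t *\<^sub>R x0" "y = L m + t * c" unfolding G_def by blast
    then show "y \<le> p x" using dom by simp
  qed
  moreover have "M \<subseteq> G"
  proof
    fix q assume "q \<in> M"
    then obtain x y where q: "q = (x,y)" "(x,y) \<in> M" by (cases q) auto
    then have "x \<in> D" "L x = y" using Leq D_def by auto
    moreover have "(x + 0 *\<^sub>R x0, L x + 0 * c) \<in> G" unfolding G_def using \<open>x \<in> D\<close> by blast
    ultimately show "q \<in> G" unfolding q by simp
  qed
  moreover have "G \<noteq> M"
  proof -
    have "(0 + 1 *\<^sub>R x0, L 0 + 1 * c) \<in> G" unfolding G_def using D0 by blast
    then have "(x0, c) \<in> G" using L0 by simp
    then show "G \<noteq> M" using x0 by auto
  qed
  ultimately show ?thesis by (intro exI[of _ G] conjI)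
qed

lemma hahn_banach0:
  fixes p :: "'v::real_vector \<Rightarrow> real"
  assumes sub: "\<And>x y. p (x + y) \<le> p x + p y"
    and hom: "\<And>r x. r > 0 \<Longrightarrow> p (r *\<^sub>R x) \<le> r * p x"
  shows "\<exists>l. linear l \<and> (\<forall>x. l x \<le> p x)"
proof -
  have p0: "p 0 \<ge> 0" using hom[of 2 0] by simp
  have single: "hbgood p {(0,0)}" unfolding hbgood_def using p0 by auto
  have "\<forall>C\<in>chains {G. hbgood p G}. \<exists>U\<in>{G. hbgood p G}. \<forall>X\<in>C. X \<subseteq> U"
  proof
    fix C assume C: "C \<in> chains {G. hbgood p G}"
    show "\<exists>U\<in>{G. hbgood p G}. \<forall>X\<in>C. X \<subseteq> U"
    proof (cases "C = {}")
      case True then show ?thesis using single by auto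
    next
      case False then show ?thesis using hbgood_chain[OF C] by auto
    qed
  qed
  from Zorn_Lemma2[OF this] obtain M where M: "hbgood p M"
    and max: "\<And>X. hbgood p X \<Longrightarrow> M \<subseteq> X \<Longrightarrow> X = M" by auto
  have Dom: "x \<in> Domain M" for x
  proof (rule ccontr)
    assume "x \<notin> Domain M"
    then obtain G where "hbgood p G" "M \<subseteq> G" "G \<noteq> M" using hbgood_extend[OF sub hom M] by blast
    then show False using max by blast
  qed
  have fnc: "\<And>x y z. (x,y)\<in>M \<Longrightarrow> (x,z)\<in>M \<Longrightarrow> y = z" using hbgoodD(1)[OF M] by blast
  define l where "l x = (THE y. (x,y) \<in> M)" for x
  have lM: "(x, l x) \<in> M" for x
  proof -
    obtain y where "(x,y)\<in>M" using Dom[of x] by auto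
    then show ?thesis unfolding l_def using fnc by (metis theI)
  qed
  have leq: "l x = y" if "(x,y) \<in> M" for x y using lM[of x] that fnc by blast
  have "linear l"
  proof (rule linearI)
    fix x y
    have "(x + y, l x + l y) \<in> M" using hbgoodD(3)[OF M lM[of x] lM[of y]] .
    then show "l (x + y) = l x + l y" using leq by blast
  next
    fix r x
    have "(r *\<^sub>R x, r * l x) \<in> M" using hbgoodD(4)[OF M lM[of x]] .
    then show "l (r *\<^sub>R x) = r *\<^sub>R l x" using leq by simp
  qed
  moreover have "\<forall>x. l x \<le> p x" using lM hbgoodD(5)[OF M] by blast
  ultimately show ?thesis by (intro exI[of _ l] conjI)
qed

lemma separation:
  fixes K :: "'v::real_vector set" and N :: "'v \<Rightarrow> real"
  assumes cK: "convex K" and neK: "K \<noteq> {}"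
    and Nsub: "\<And>x y. N (x + y) \<le> N x + N y"
    and Nhom: "\<And>r x. N (r *\<^sub>R x) = \<bar>r\<bar> * N x"
    and del: "\<delta> > 0" and Kd: "\<And>k. k \<in> K \<Longrightarrow> \<delta> \<le> N k"
  shows "\<exists>l. linear l \<and> (\<forall>v. l v \<le> N v) \<and> (\<forall>k\<in>K. l k \<le> - \<delta>)"
proof -
  have N0: "N 0 = 0" using Nhom[of 0 0] by simp
  have Nneg: "N (- x) = N x" for x using Nhom[of "-1" x] by simp
  have Nge: "N (t *\<^sub>R k) \<le> N (v - t *\<^sub>R k) + N v" for v t k
  proof -
    have "N (t *\<^sub>R k) = N (v + (- (v - t *\<^sub>R k)))" by simp
    also have "\<dots> \<le> N v + N (- (v - t *\<^sub>R k))" by (rule Nsub)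
    finally show ?thesis using Nneg[of "v - t *\<^sub>R k"] by simp
  qed
  define S where "S v = {N (v - t *\<^sub>R k) - t * \<delta> | t k. t \<ge> 0 \<and> k \<in> K}" for v
  define p where "p v = Inf (S v)" for v
  obtain k0 where k0: "k0 \<in> K" using neK by auto
  have Sne: "S v \<noteq> {}" for v unfolding S_def using k0 by auto
  have Slow: "- N v \<le> s" if sS: "s \<in> S v" for s v
  proof -
    obtain t k where tk: "t \<ge> 0" "k \<in> K" "s = N (v - t *\<^sub>R k) - t * \<delta>" using sS unfolding S_def by blast
    have "t * \<delta> \<le> t * N k" using Kd[OF tk(2)] tk(1) by (simp add: mult_left_mono)
    also have "t * N k = N (t *\<^sub>R k)" using Nhom tk(1) by simp
    finally show ?thesis using Nge[of t k v] tk by simp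
  qed
  have Sbdd: "bdd_below (S v)" for v unfolding bdd_below_def using Slow by blast
  have ple: "p v \<le> N (v - t *\<^sub>R k) - t * \<delta>" if "t \<ge> 0" "k \<in> K" for v t k
    unfolding p_def by (rule cInf_lower[OF _ Sbdd]) (use that S_def in auto)
  have pge: "z \<le> p v" if "\<And>t k. t \<ge> 0 \<Longrightarrow> k \<in> K \<Longrightarrow> z \<le> N (v - t *\<^sub>R k) - t * \<delta>" for z v
    unfolding p_def by (rule cInf_greatest[OF Sne]) (use that S_def in auto)
  have psub: "p (x + y) \<le> p x + p y" for x y
  proof -
    have A: "p (x + y) \<le> (N (x - t1 *\<^sub>R k1) - t1 * \<delta>) + (N (y - t2 *\<^sub>R k2) - t2 * \<delta>)"
      if "t1 \<ge> 0" "k1 \<in> K" "t2 \<ge> 0" "k2 \<in> K" for t1 t2 :: real and k1 k2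
    proof (cases "t1 + t2 = 0")
      case True
      then have "t1 = 0" "t2 = 0" using that by auto
      then show ?thesis using ple[of 0 k1 "x + y"] that Nsub[of x y] by simp
    next
      case False
      then have tp: "t1 + t2 > 0" using that by simp
      define k where "k = (t1 / (t1 + t2)) *\<^sub>R k1 + (t2 / (t1 + t2)) *\<^sub>R k2"
      have kK: "k \<in> K" unfolding k_def
        using cK that tp by (intro convexD) (auto simp: add_divide_distrib[symmetric])
      have tk: "(t1 + t2) *\<^sub>R k = t1 *\<^sub>R k1 + t2 *\<^sub>R k2" unfolding k_def using tp
        by (simp add: scaleR_add_right)
      have "p (x + y) \<le> N (x + y - (t1 + t2) *\<^sub>R k) - (t1 + t2) * \<delta>"
        using ple[of "t1 + t2" k "x + y"] tp kK by simp
      also have "x + y - (t1 + t2) *\<^sub>R k = (x - t1 *\<^sub>R k1) + (y - t2 *\<^sub>R k2)"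
        using tk by (simp add: algebra_simps)
      also have "N \<dots> \<le> N (x - t1 *\<^sub>R k1) + N (y - t2 *\<^sub>R k2)" by (rule Nsub)
      finally show ?thesis by (simp add: algebra_simps)
    qed
    have "p (x + y) - p y \<le> p x"
    proof (rule pge)
      fix t1 :: real and k1 assume h1: "t1 \<ge> 0" "k1 \<in> K"
      have "p (x + y) - (N (x - t1 *\<^sub>R k1) - t1 * \<delta>) \<le> p y"
      proof (rule pge)
        fix t2 :: real and k2 assume "t2 \<ge> 0" "k2 \<in> K"
        then show "p (x + y) - (N (x - t1 *\<^sub>R k1) - t1 * \<delta>) \<le> N (y - t2 *\<^sub>R k2) - t2 * \<delta>"
          using A[of t1 k1 t2 k2] h1 by simp
      qed
      then show "p (x + y) - p y \<le> N (x - t1 *\<^sub>R k1) - t1 * \<delta>" by simp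
    qed
    then show ?thesis by simp
  qed
  have phom: "p (r *\<^sub>R x) \<le> r * p x" if r: "r > 0" for r x
  proof -
    have "p (r *\<^sub>R x) / r \<le> p x"
    proof (rule pge)
      fix t :: real and k assume tk: "t \<ge> 0" "k \<in> K"
      have "p (r *\<^sub>R x) \<le> N (r *\<^sub>R x - (r * t) *\<^sub>R k) - (r * t) * \<delta>"
        using ple[of "r * t" k "r *\<^sub>R x"] tk r by simp
      also have "r *\<^sub>R x - (r * t) *\<^sub>R k = r *\<^sub>R (x - t *\<^sub>R k)" by (simp add: algebra_simps)
      also have "N \<dots> = r * N (x - t *\<^sub>R k)" using Nhom r by simp
      finally have "p (r *\<^sub>R x) \<le> r * (N (x - t *\<^sub>R k) - t * \<delta>)" by (simp add: algebra_simps)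
      then show "p (r *\<^sub>R x) / r \<le> N (x - t *\<^sub>R k) - t * \<delta>" using r by (simp add: field_simps)
    qed
    then show ?thesis using r by (simp add: field_simps)
  qed
  obtain l where l: "linear l" "\<And>x. l x \<le> p x" using hahn_banach0[of p] psub phom by blast
  have "l v \<le> N v" for v using l(2)[of v] ple[of 0 k0 v] k0 by simp
  moreover have "l k \<le> - \<delta>" if "k \<in> K" for k using l(2)[of k] ple[of 1 k k] that N0 by simp
  ultimately show ?thesis using l(1) by (intro exI[of _ l]) auto
qed

lemma carr_dual_iff:
  "f \<in> carr (dual S) \<longleftrightarrow> (\<forall>x\<in>carr S. \<forall>y\<in>carr S. f (addv S x y) = f x + f y)
     \<and> (\<forall>c. \<forall>x\<in>carr S. f (smulv S c x) = c * f x)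
     \<and> (\<exists>K. \<forall>x\<in>carr S. cmod (f x) \<le> K * nrm S x) \<and> (\<forall>x. x \<notin> carr S \<longrightarrow> f x = 0)"
  by (simp add: dual_def)

lemma addv_dual [simp]: "addv (dual S) = (\<lambda>f g x. f x + g x)" by (simp add: dual_def)
lemma smulv_dual [simp]: "smulv (dual S) = (\<lambda>c f x. c * f x)" by (simp add: dual_def)
lemma nrm_dual: "nrm (dual S) f = Sup {cmod (f x) | x. x \<in> carr S \<and> nrm S x \<le> 1}" by (simp add: dual_def)

lemma Aspace_simps [simp]: "carr (Aspace J) = UNIV" "addv (Aspace J) = (+)"
  "smulv (Aspace J) = cscale J" "nrm (Aspace J) = norm" by (simp_all add: Aspace_def)

lemma dualA_iff:
  "f \<in> carr (dual (Aspace J)) \<longleftrightarrow> (\<forall>x y. f (x + y) = f x + f y)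
     \<and> (\<forall>c x. f (cscale J c x) = c * f x) \<and> (\<exists>K. \<forall>x. cmod (f x) \<le> K * norm x)"
  by (simp add: carr_dual_iff)

lemma nrm_dualA: "nrm (dual (Aspace J)) f = Sup {cmod (f x) | x. norm x \<le> 1}"
  by (simp add: nrm_dual)

lemma cscale_real [simp]: "cscale J (complex_of_real r) x = r *\<^sub>R x"
  by (simp add: cscale_def)

lemma cs_props:
  assumes "complex_structure J"
  shows "J (x + y) = J x + J y" "J (r *\<^sub>R x) = r *\<^sub>R J x" "J (J x) = - x"
    "J (x * y) = J x * y" "J (x * y) = x * J y" "norm (cscale J c x) = cmod c * norm x"
proof -
  have l: "linear J" and a: "\<forall>x. J (J x) = - x" and b: "\<forall>x y. J (x * y) = J x * y \<and> J (x * y) = x * J y"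
    and c: "\<forall>c x. norm (cscale J c x) = cmod c * norm x"
    using assms unfolding complex_structure_def by blast+
  show "J (x + y) = J x + J y" "J (r *\<^sub>R x) = r *\<^sub>R J x" using l by (auto simp: linear_add linear_scale)
  show "J (J x) = - x" using a by blast
  show "J (x * y) = J x * y" using b by blast
  show "J (x * y) = x * J y" using b by blast
  show "norm (cscale J c x) = cmod c * norm x" using c by blast
qed

lemma dualA_add: "f \<in> carr (dual (Aspace J)) \<Longrightarrow> f (x + y) = f x + f y"
  by (simp add: dualA_iff)
lemma dualA_cscale: "f \<in> carr (dual (Aspace J)) \<Longrightarrow> f (cscale J c x) = c * f x"
  by (simp add: dualA_iff)
lemma dualA_scaleR: "f \<in> carr (dual (Aspace J)) \<Longrightarrow> f (r *\<^sub>R x) = complex_of_real r * f x"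
  using dualA_cscale[of f J "complex_of_real r" x] by simp
lemma dualA_zero: "f \<in> carr (dual (Aspace J)) \<Longrightarrow> f 0 = 0"
  using dualA_scaleR[of f J 0 0] by simp
lemma dualA_minus: "f \<in> carr (dual (Aspace J)) \<Longrightarrow> f (- x) = - f x"
  using dualA_scaleR[of f J "-1" x] by simp
lemma dualA_diff: "f \<in> carr (dual (Aspace J)) \<Longrightarrow> f (x - y) = f x - f y"
  using dualA_add[of f J x "- y"] dualA_minus[of f J y] by simp
lemma dualA_bound: "f \<in> carr (dual (Aspace J)) \<Longrightarrow> \<exists>K\<ge>0. \<forall>x. cmod (f x) \<le> K * norm x"
proof -
  assume "f \<in> carr (dual (Aspace J))"
  then obtain K where K: "\<And>x. cmod (f x) \<le> K * norm x" by (auto simp: dualA_iff)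
  have "cmod (f x) \<le> \<bar>K\<bar> * norm x" for x
    using order_trans[OF K[of x] mult_right_mono[OF abs_ge_self[of K] norm_ge_zero[of x]]] .
  then show ?thesis by (intro exI[of _ "\<bar>K\<bar>"]) auto
qed

lemma dualA_I: "(\<And>x y. f (x + y) = f x + f y) \<Longrightarrow> (\<And>c x. f (cscale J c x) = c * f x)
  \<Longrightarrow> (\<And>x. cmod (f x) \<le> K * norm x) \<Longrightarrow> f \<in> carr (dual (Aspace J))"
  unfolding dualA_iff by blast

lemma dualA_addf: "f \<in> carr (dual (Aspace J)) \<Longrightarrow> g \<in> carr (dual (Aspace J))
   \<Longrightarrow> (\<lambda>x. f x + g x) \<in> carr (dual (Aspace J))"
proof -
  assume f: "f \<in> carr (dual (Aspace J))" and g: "g \<in> carr (dual (Aspace J))"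
  obtain K1 where K1: "K1 \<ge> 0" "\<And>x. cmod (f x) \<le> K1 * norm x" using dualA_bound[OF f] by auto
  obtain K2 where K2: "K2 \<ge> 0" "\<And>x. cmod (g x) \<le> K2 * norm x" using dualA_bound[OF g] by auto
  have "cmod (f x + g x) \<le> (K1 + K2) * norm x" for x
    using norm_triangle_ineq[of "f x" "g x"] K1(2)[of x] K2(2)[of x] by (simp add: algebra_simps)
  then show ?thesis
    by (rule dualA_I[rotated 2])
      (simp_all add: dualA_add[OF f] dualA_add[OF g] dualA_cscale[OF f] dualA_cscale[OF g] distrib_left)
qed

lemma dualA_smulf: "f \<in> carr (dual (Aspace J)) \<Longrightarrow> (\<lambda>x. c * f x) \<in> carr (dual (Aspace J))"
proof -
  assume f: "f \<in> carr (dual (Aspace J))"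
  obtain K1 where K1: "K1 \<ge> 0" "\<And>x. cmod (f x) \<le> K1 * norm x" using dualA_bound[OF f] by auto
  have "cmod (c * f x) \<le> (cmod c * K1) * norm x" for x
    using K1(2)[of x] by (simp add: norm_mult mult_left_mono mult.assoc)
  then show ?thesis
    by (rule dualA_I[rotated 2])
      (simp_all add: dualA_add[OF f] dualA_cscale[OF f] distrib_left)
qed

lemma dualA_0f: "(\<lambda>x. 0) \<in> carr (dual (Aspace J))"
  by (auto simp: dualA_iff intro!: exI[of _ 0])

lemma nrm_dualA_le:
  assumes "\<And>x. cmod (f x) \<le> M * norm x" "M \<ge> 0"
  shows "nrm (dual (Aspace J)) f \<le> M"
  unfolding nrm_dualA
proof (rule cSup_least)
  show "{cmod (f x) |x. norm x \<le> 1} \<noteq> {}" by (auto intro: exI[of _ 0])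
next
  fix y assume "y \<in> {cmod (f x) |x. norm x \<le> 1}"
  then obtain x where "norm x \<le> 1" "y = cmod (f x)" by auto
  then show "y \<le> M" using order_trans[OF assms(1)[of x] mult_left_mono[OF \<open>norm x \<le> 1\<close> assms(2)]] by simp
qed

lemma nrm_dualA_bdd:
  assumes "f \<in> carr (dual (Aspace J))"
  shows "bdd_above {cmod (f x) |x. norm x \<le> 1}"
proof -
  obtain K where K: "K \<ge> 0" "\<And>x. cmod (f x) \<le> K * norm x" using dualA_bound[OF assms] by auto
  show ?thesis unfolding bdd_above_def
  proof (intro exI[of _ K] ballI)
    fix y assume "y \<in> {cmod (f x) |x. norm x \<le> 1}"
    then obtain x where x: "norm x \<le> 1" "y = cmod (f x)" by auto
    then show "y \<le> K" using order_trans[OF K(2)[of x] mult_left_mono[OF x(1) K(1)]] by simp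
  qed
qed

lemma nrm_dualA_ge0:
  assumes "f \<in> carr (dual (Aspace J))"
  shows "nrm (dual (Aspace J)) f \<ge> 0"
proof -
  have "cmod (f 0) \<le> nrm (dual (Aspace J)) f"
    unfolding nrm_dualA by (rule cSup_upper[OF _ nrm_dualA_bdd[OF assms]]) auto
  then show ?thesis using dualA_zero[OF assms] by simp
qed

lemma nrm_dualA_upper:
  assumes "f \<in> carr (dual (Aspace J))" "norm x \<le> 1"
  shows "cmod (f x) \<le> nrm (dual (Aspace J)) f"
  unfolding nrm_dualA by (rule cSup_upper[OF _ nrm_dualA_bdd[OF assms(1)]]) (use assms in auto)

lemma dualA_nrm_bound:
  assumes "f \<in> carr (dual (Aspace J))"
  shows "cmod (f x) \<le> nrm (dual (Aspace J)) f * norm x"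
proof (cases "x = 0")
  case True then show ?thesis using dualA_zero[OF assms] by simp
next
  case False
  define y where "y = (1 / norm x) *\<^sub>R x"
  have ny: "norm y \<le> 1" using False by (simp add: y_def)
  have "x = norm x *\<^sub>R y" using False by (simp add: y_def)
  then have "f x = complex_of_real (norm x) * f y" using dualA_scaleR[OF assms] by metis
  then have "cmod (f x) = norm x * cmod (f y)" by (simp add: norm_mult)
  also have "\<dots> \<le> norm x * nrm (dual (Aspace J)) f"
    using nrm_dualA_upper[OF assms ny] by (simp add: mult_left_mono)
  finally show ?thesis by (simp add: mult.commute)
qed

section \<open>Bidual\<close>

lemma bidual_iff:
  "\<Phi> \<in> carr (dual (dual (Aspace J))) \<longleftrightarrow>
     (\<forall>f\<in>carr (dual (Aspace J)). \<forall>g\<in>carr (dual (Aspace J)). \<Phi> (\<lambda>x. f x + g x) = \<Phi> f + \<Phi> g)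
   \<and> (\<forall>c. \<forall>f\<in>carr (dual (Aspace J)). \<Phi> (\<lambda>x. c * f x) = c * \<Phi> f)
   \<and> (\<exists>K. \<forall>f\<in>carr (dual (Aspace J)). cmod (\<Phi> f) \<le> K * nrm (dual (Aspace J)) f)
   \<and> (\<forall>f. f \<notin> carr (dual (Aspace J)) \<longrightarrow> \<Phi> f = 0)"
  by (simp only: carr_dual_iff[of \<Phi> "dual (Aspace J)"] addv_dual smulv_dual)

lemma bidual_add: "\<Phi> \<in> carr (dual (dual (Aspace J))) \<Longrightarrow> f \<in> carr (dual (Aspace J)) \<Longrightarrow>
   g \<in> carr (dual (Aspace J)) \<Longrightarrow> \<Phi> (\<lambda>x. f x + g x) = \<Phi> f + \<Phi> g"
  by (simp add: bidual_iff)
lemma bidual_smul: "\<Phi> \<in> carr (dual (dual (Aspace J))) \<Longrightarrow> f \<in> carr (dual (Aspace J)) \<Longrightarrow>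
   \<Phi> (\<lambda>x. c * f x) = c * \<Phi> f"
  by (simp add: bidual_iff)
lemma bidual_zero: "\<Phi> \<in> carr (dual (dual (Aspace J))) \<Longrightarrow> \<Phi> (\<lambda>x. 0) = 0"
  using bidual_smul[of \<Phi> J "\<lambda>x. 0" 0] dualA_0f[of J] by simp

lemma bidual_sum:
  assumes "\<Phi> \<in> carr (dual (dual (Aspace J)))" "finite G" "G \<subseteq> carr (dual (Aspace J))"
  shows "(\<lambda>x. \<Sum>f\<in>G. c f * f x) \<in> carr (dual (Aspace J)) \<and>
         \<Phi> (\<lambda>x. \<Sum>f\<in>G. c f * f x) = (\<Sum>f\<in>G. c f * \<Phi> f)"
  using assms(2,3)
proof (induction G rule: finite_induct)
  case empty
  then show ?case using dualA_0f[of J] bidual_zero[OF assms(1)] by simp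
next
  case (insert f0 G)
  have f0: "f0 \<in> carr (dual (Aspace J))" using insert by auto
  have IH: "(\<lambda>x. \<Sum>f\<in>G. c f * f x) \<in> carr (dual (Aspace J))"
    "\<Phi> (\<lambda>x. \<Sum>f\<in>G. c f * f x) = (\<Sum>f\<in>G. c f * \<Phi> f)" using insert by auto
  have e: "(\<lambda>x. \<Sum>f\<in>insert f0 G. c f * f x) = (\<lambda>x. (c f0 * f0 x) + (\<Sum>f\<in>G. c f * f x))"
    using insert by simp
  have s: "(\<lambda>x. c f0 * f0 x) \<in> carr (dual (Aspace J))" by (rule dualA_smulf[OF f0])
  have "\<Phi> (\<lambda>x. (c f0 * f0 x) + (\<Sum>f\<in>G. c f * f x)) = \<Phi> (\<lambda>x. c f0 * f0 x) + \<Phi> (\<lambda>x. \<Sum>f\<in>G. c f * f x)"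
    by (rule bidual_add[OF assms(1) s IH(1)])
  also have "\<dots> = c f0 * \<Phi> f0 + (\<Sum>f\<in>G. c f * \<Phi> f)"
    using IH(2) bidual_smul[OF assms(1) f0] by simp
  also have "\<dots> = (\<Sum>f\<in>insert f0 G. c f * \<Phi> f)" using insert.hyps by simp
  finally show ?case unfolding e using dualA_addf[OF s IH(1)] by simp
qed

lemma bidual_upper:
  assumes "\<Phi> \<in> carr (dual (dual (Aspace J)))" "f \<in> carr (dual (Aspace J))"
    "nrm (dual (Aspace J)) f \<le> 1"
  shows "cmod (\<Phi> f) \<le> nrm (dual (dual (Aspace J))) \<Phi>"
proof -
  obtain K where K: "\<And>f. f\<in>carr (dual (Aspace J)) \<Longrightarrow> cmod (\<Phi> f) \<le> K * nrm (dual (Aspace J)) f"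
    using assms(1) unfolding bidual_iff by blast
  have bdd: "bdd_above {cmod (\<Phi> g) |g. g \<in> carr (dual (Aspace J)) \<and> nrm (dual (Aspace J)) g \<le> 1}"
    unfolding bdd_above_def
  proof (intro exI[of _ "\<bar>K\<bar>"] ballI)
    fix y assume "y \<in> {cmod (\<Phi> g) |g. g \<in> carr (dual (Aspace J)) \<and> nrm (dual (Aspace J)) g \<le> 1}"
    then obtain g where g: "g \<in> carr (dual (Aspace J))" "nrm (dual (Aspace J)) g \<le> 1" "y = cmod (\<Phi> g)" by auto
    have n0: "nrm (dual (Aspace J)) g \<ge> 0" by (rule nrm_dualA_ge0[OF g(1)])
    have "K * nrm (dual (Aspace J)) g \<le> \<bar>K\<bar> * nrm (dual (Aspace J)) g"
      by (rule mult_right_mono[OF abs_ge_self n0])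
    also have "\<dots> \<le> \<bar>K\<bar> * 1" by (rule mult_left_mono[OF g(2)]) simp
    finally have "K * nrm (dual (Aspace J)) g \<le> \<bar>K\<bar>" by simp
    then show "y \<le> \<bar>K\<bar>" using K[OF g(1)] g(3) by simp
  qed
  show ?thesis
    unfolding nrm_dual[of "dual (Aspace J)"]
    by (rule cSup_upper[OF _ bdd]) (use assms in auto)
qed

section \<open>The cone r_A\<close>

lemma unitz_carr_pair [simp]: "(a, 0) \<in> carr (unitz J)"
  by (simp add: unitz_def)

lemma rA_state_facts:
  assumes "\<phi> \<in> states (unitz J) (unitz_one TYPE('a::real_normed_algebra))"
  shows "\<phi> ((a::'a) + b, 0) = \<phi> (a, 0) + \<phi> (b, 0)"
    "\<phi> (r *\<^sub>R a, 0) = complex_of_real r * \<phi> (a, 0)"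
proof -
  have d: "\<phi> \<in> carr (dual (unitz J))" using assms by (simp add: states_def)
  have "\<phi> (addv (unitz J) (a, 0) (b, 0)) = \<phi> (a, 0) + \<phi> (b, 0)"
    using d unfolding carr_dual_iff by auto
  then show "\<phi> (a + b, 0) = \<phi> (a, 0) + \<phi> (b, 0)" by (simp add: unitz_def)
  have "\<phi> (smulv (unitz J) (complex_of_real r) (a, 0)) = complex_of_real r * \<phi> (a, 0)"
    using d unfolding carr_dual_iff by auto
  then show "\<phi> (r *\<^sub>R a, 0) = complex_of_real r * \<phi> (a, 0)" by (simp add: unitz_def)
qed

lemma rA_add: fixes J :: "'a::real_normed_algebra \<Rightarrow> 'a"
  assumes a: "a \<in> rA J" and b: "b \<in> rA J" shows "a + b \<in> rA J"
  unfolding rA_def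
proof (intro CollectI ballI)
  fix \<phi> assume h: "\<phi> \<in> states (unitz J) (unitz_one TYPE('a))"
  have "0 \<le> Re (\<phi> (a, 0))" "0 \<le> Re (\<phi> (b, 0))" using a b h unfolding rA_def by blast+
  then show "0 \<le> Re (\<phi> (a + b, 0))" using rA_state_facts(1)[OF h, of a b] by simp
qed

lemma rA_scale: fixes J :: "'a::real_normed_algebra \<Rightarrow> 'a"
  assumes a: "a \<in> rA J" and r: "r \<ge> 0" shows "r *\<^sub>R a \<in> rA J"
  unfolding rA_def
proof (intro CollectI ballI)
  fix \<phi> assume h: "\<phi> \<in> states (unitz J) (unitz_one TYPE('a))"
  have "0 \<le> Re (\<phi> (a, 0))" using a h unfolding rA_def by blast
  then show "0 \<le> Re (\<phi> (r *\<^sub>R a, 0))" using rA_state_facts(2)[OF h, of r a] r by simp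
qed

lemma rA_zero: fixes J :: "'a::real_normed_algebra \<Rightarrow> 'a" shows "0 \<in> rA J"
  unfolding rA_def
proof (intro CollectI ballI)
  fix \<phi> assume h: "\<phi> \<in> states (unitz J) (unitz_one TYPE('a))"
  show "0 \<le> Re (\<phi> (0, 0))" using rA_state_facts(2)[OF h, of 0 0] by simp
qed

abbreviation "DA J \<equiv> carr (dual (Aspace J))"
abbreviation "X2 J \<equiv> carr (dual (dual (Aspace J)))"

lemma complexify:
  fixes J :: "'a::real_normed_algebra \<Rightarrow> 'a" and l :: "'a \<Rightarrow> real"
  assumes cs: "complex_structure J" and l: "linear l" and b: "\<And>x. l x \<le> M * norm x"
  shows "(\<lambda>x. Complex (l x) (- l (J x))) \<in> DA J"
    "\<And>x. Re (Complex (l x) (- l (J x))) = l x"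
    "\<And>x. cmod (Complex (l x) (- l (J x))) \<le> M * norm x"
proof -
  define g where "g x = Complex (l x) (- l (J x))" for x
  have ladd: "l (x + y) = l x + l y" for x y using l by (simp add: linear_add)
  have lsc: "l (r *\<^sub>R x) = r * l x" for r x using l by (simp add: linear_scale)
  have hom: "g (cscale J c x) = c * g x" for c x
  proof -
    have e1: "cscale J c x = Re c *\<^sub>R x + Im c *\<^sub>R J x" by (simp add: cscale_def)
    have e2: "J (cscale J c x) = Re c *\<^sub>R J x - Im c *\<^sub>R x"
      unfolding e1 using cs_props[OF cs] by simp
    have r1: "l (cscale J c x) = Re c * l x + Im c * l (J x)" unfolding e1 by (simp add: ladd lsc)
    have r2: "l (J (cscale J c x)) = Re c * l (J x) - Im c * l x"
      unfolding e2 by (simp add: linear_diff[OF l] lsc)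
    show ?thesis unfolding g_def complex_eq_iff r1 r2 by (simp add: algebra_simps)
  qed
  have gadd: "g (x + y) = g x + g y" for x y
    using cs_props(1)[OF cs] by (simp add: g_def ladd complex_eq_iff)
  have bnd: "cmod (g x) \<le> M * norm x" for x
  proof (cases "g x = 0")
    case True
    have "l (- x) = - l x" using lsc[of "-1" x] by simp
    then have "0 \<le> M * norm x" using b[of x] b[of "-x"] by simp
    then show ?thesis using True by simp
  next
    case False
    define w where "w = g x"
    define c where "c = cnj w / complex_of_real (cmod w)"
    have w0: "cmod w > 0" using False w_def by simp
    have cc: "cmod c = 1" using w0 by (simp add: c_def norm_divide)
    have "g (cscale J c x) = c * w" using hom w_def by simp
    also have "c * w = complex_of_real (cmod w)"
    proof -
      have sq: "cnj w * w = complex_of_real (cmod w) * complex_of_real (cmod w)"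
        using complex_norm_square[of w] by (simp add: power2_eq_square mult.commute)
      have "c * w = (cnj w * w) / complex_of_real (cmod w)" by (simp add: c_def)
      also have "\<dots> = complex_of_real (cmod w)" using w0 unfolding sq by simp
      finally show ?thesis .
    qed
    finally have "Re (g (cscale J c x)) = cmod w" by simp
    moreover have "Re (g (cscale J c x)) = l (cscale J c x)" by (simp add: g_def)
    moreover have "l (cscale J c x) \<le> M * norm (cscale J c x)" by (rule b)
    moreover have "norm (cscale J c x) = norm x" using cs_props(6)[OF cs] cc by simp
    ultimately show ?thesis using w_def by simp
  qed
  show "(\<lambda>x. Complex (l x) (- l (J x))) \<in> DA J"
    using dualA_I[of g J, OF gadd hom bnd] by (simp add: g_def[abs_def])
  show "\<And>x. Re (Complex (l x) (- l (J x))) = l x" by simp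
  show "\<And>x. cmod (Complex (l x) (- l (J x))) \<le> M * norm x" using bnd by (simp add: g_def)
qed

lemma cone_HB:
  fixes N :: "'v::real_vector \<Rightarrow> real" and h :: "'v \<Rightarrow> real"
  assumes Nsub: "\<And>x y. N (x + y) \<le> N x + N y"
    and Nhom: "\<And>r x. N (r *\<^sub>R x) = \<bar>r\<bar> * N x"
    and Q0: "0 \<in> Q" and Qadd: "\<And>x y. x \<in> Q \<Longrightarrow> y \<in> Q \<Longrightarrow> x + y \<in> Q"
    and Qsc: "\<And>r x. x \<in> Q \<Longrightarrow> r \<ge> 0 \<Longrightarrow> r *\<^sub>R x \<in> Q"
    and h: "linear h" and hN: "\<And>c. c \<in> Q \<Longrightarrow> h c \<le> N c"
  shows "\<exists>l. linear l \<and> (\<forall>v. l v \<le> N v) \<and> (\<forall>c\<in>Q. h c \<le> l c)"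
proof -
  have N0: "N 0 = 0" using Nhom[of 0 0] by simp
  have Nneg: "N (- x) = N x" for x using Nhom[of "-1" x] by simp
  have hadd: "h (x + y) = h x + h y" for x y using h by (simp add: linear_add)
  have hsc: "h (r *\<^sub>R x) = r * h x" for r x using h by (simp add: linear_scale)
  define S where "S v = {N (v + c) - h c | c. c \<in> Q}" for v
  define p where "p v = Inf (S v)" for v
  have Sne: "S v \<noteq> {}" for v unfolding S_def using Q0 by auto
  have Slow: "- N v \<le> s" if sS: "s \<in> S v" for s v
  proof -
    obtain c where c: "c \<in> Q" "s = N (v + c) - h c" using sS unfolding S_def by blast
    have "N c = N ((v + c) + (- v))" by simp
    also have "\<dots> \<le> N (v + c) + N (- v)" by (rule Nsub)
    finally have "N c \<le> N (v + c) + N v" using Nneg by simp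
    then show ?thesis using hN[OF c(1)] c(2) by simp
  qed
  have Sbdd: "bdd_below (S v)" for v unfolding bdd_below_def using Slow by blast
  have ple: "p v \<le> N (v + c) - h c" if "c \<in> Q" for v c
    unfolding p_def by (rule cInf_lower[OF _ Sbdd]) (use that S_def in auto)
  have pge: "z \<le> p v" if "\<And>c. c \<in> Q \<Longrightarrow> z \<le> N (v + c) - h c" for z v
    unfolding p_def by (rule cInf_greatest[OF Sne]) (use that S_def in auto)
  have psub: "p (x + y) \<le> p x + p y" for x y
  proof -
    have A: "p (x + y) \<le> (N (x + c1) - h c1) + (N (y + c2) - h c2)" if "c1 \<in> Q" "c2 \<in> Q" for c1 c2
    proof -
      have "p (x + y) \<le> N (x + y + (c1 + c2)) - h (c1 + c2)" using ple Qadd that by blast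
      also have "x + y + (c1 + c2) = (x + c1) + (y + c2)" by (simp add: algebra_simps)
      also have "N \<dots> \<le> N (x + c1) + N (y + c2)" by (rule Nsub)
      finally show ?thesis using hadd by simp
    qed
    have "p (x + y) - p y \<le> p x"
    proof (rule pge)
      fix c1 assume h1: "c1 \<in> Q"
      have "p (x + y) - (N (x + c1) - h c1) \<le> p y"
      proof (rule pge)
        fix c2 assume "c2 \<in> Q"
        show "p (x + y) - (N (x + c1) - h c1) \<le> N (y + c2) - h c2" using A[OF h1 \<open>c2 \<in> Q\<close>] by simp
      qed
      then show "p (x + y) - p y \<le> N (x + c1) - h c1" by simp
    qed
    then show ?thesis by simp
  qed
  have phom: "p (r *\<^sub>R x) \<le> r * p x" if r: "r > 0" for r x
  proof -
    have "p (r *\<^sub>R x) / r \<le> p x"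
    proof (rule pge)
      fix c assume c: "c \<in> Q"
      have "p (r *\<^sub>R x) \<le> N (r *\<^sub>R x + r *\<^sub>R c) - h (r *\<^sub>R c)"
        using ple Qsc[OF c] r by simp
      also have "r *\<^sub>R x + r *\<^sub>R c = r *\<^sub>R (x + c)" by (simp add: algebra_simps)
      also have "N \<dots> = r * N (x + c)" using Nhom r by simp
      finally have "p (r *\<^sub>R x) \<le> r * (N (x + c) - h c)" by (simp add: hsc algebra_simps)
      then show "p (r *\<^sub>R x) / r \<le> N (x + c) - h c" using r by (simp add: field_simps)
    qed
    then show ?thesis using r by (simp add: field_simps)
  qed
  obtain l where l: "linear l" "\<And>x. l x \<le> p x" using hahn_banach0[of p] psub phom by blast
  have h0: "h 0 = 0" using hsc[of 0 0] by simp
  have "l v \<le> N v" for v using l(2)[of v] ple[OF Q0, of v] h0 by simp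
  moreover have "h c \<le> l c" if "c \<in> Q" for c
  proof -
    have "l (- c) \<le> N (- c + c) - h c" using l(2)[of "-c"] ple[OF that, of "-c"] by simp
    moreover have "l (- c) = - l c" using l(1) by (simp add: linear_neg)
    ultimately show ?thesis using N0 by simp
  qed
  ultimately show ?thesis using l(1) by (intro exI[of _ l]) auto
qed

lemma lin_decomp:
  fixes l :: "('i \<Rightarrow> 'b::real_vector) \<Rightarrow> real"
  assumes l: "linear l" and I: "finite I"
  shows "(\<forall>i. i \<notin> I \<longrightarrow> v i = 0) \<Longrightarrow> l v = (\<Sum>i\<in>I. l (\<lambda>j. if j = i then v i else 0))"
  using I
proof (induction I arbitrary: v rule: finite_induct)
  case empty
  then have "v = 0" by (auto simp: fun_eq_iff)
  then show ?case by (metis (no_types) l linear_0 sum.empty)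
next
  case (insert i0 I)
  define v' where "v' = v(i0 := 0)"
  have vv: "v = (\<lambda>j. if j = i0 then v i0 else 0) + v'" by (auto simp: fun_eq_iff v'_def)
  have v'0: "\<forall>i. i \<notin> I \<longrightarrow> v' i = 0" using insert.prems by (auto simp: v'_def)
  have "l v = l (\<lambda>j. if j = i0 then v i0 else 0) + l v'" by (subst vv) (simp add: linear_add[OF l])
  also have "l v' = (\<Sum>i\<in>I. l (\<lambda>j. if j = i then v' i else 0))" using insert.IH[OF v'0] .
  also have "\<dots> = (\<Sum>i\<in>I. l (\<lambda>j. if j = i then v i else 0))"
  proof (rule sum.cong)
    fix i assume "i \<in> I"
    then have "i \<noteq> i0" using insert.hyps by auto
    then have "v' i = v i" by (simp add: v'_def)
    then show "l (\<lambda>j. if j = i then v' i else 0) = l (\<lambda>j. if j = i then v i else 0)" by metis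
  qed simp
  finally show ?case using insert.hyps by simp
qed

lemma lin_coord_complex:
  fixes l :: "('i \<Rightarrow> complex) \<Rightarrow> real"
  assumes l: "linear l"
  shows "l (\<lambda>j. if j = i then z else 0) =
     Re (cnj (Complex (l (\<lambda>j. if j = i then 1 else 0)) (l (\<lambda>j. if j = i then \<i> else 0))) * z)"
proof -
  have "(\<lambda>j. if j = i then z else 0) = Re z *\<^sub>R (\<lambda>j. if j = i then 1 else 0) + Im z *\<^sub>R (\<lambda>j. if j = i then \<i> else 0)"
    by (auto simp: fun_eq_iff complex_eq_iff)
  then have "l (\<lambda>j. if j = i then z else 0) = Re z * l (\<lambda>j. if j = i then 1 else 0) + Im z * l (\<lambda>j. if j = i then \<i> else 0)"
    using l by (simp add: linear_add linear_scale)
  then show ?thesis by (simp add: algebra_simps)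
qed

lemma canon_A: "f \<in> DA J \<Longrightarrow> canon (Aspace J) c f = f c"
  by (simp add: canon_def)

lemma dualA_real_linear: "f \<in> DA J \<Longrightarrow> linear (\<lambda>x. Re (f x))"
  by (rule linearI) (simp_all add: dualA_add dualA_scaleR)

lemma part1:
  fixes J :: "'a::{real_normed_algebra, banach} \<Rightarrow> 'a"
  assumes cs: "complex_structure J"
    and h3: "wstar_dense (dual (Aspace J)) (canon (Aspace J) ` rA J) (rAbidual J)"
  shows "wstar_dense (dual (Aspace J))
           (canon (Aspace J) ` {x \<in> rA J. norm x \<le> 1})
           {\<eta> \<in> rAbidual J. nrm (dual (dual (Aspace J))) \<eta> \<le> 1}"
  unfolding wstar_dense_def
proof (intro ballI allI impI)
  define C where "C = {x \<in> rA J. norm x \<le> 1}"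
  fix \<eta> F and \<epsilon> :: real
  assume \<eta>: "\<eta> \<in> {\<eta> \<in> rAbidual J. nrm (dual (dual (Aspace J))) \<eta> \<le> 1}"
    and F: "finite F \<and> F \<subseteq> carr (dual (Aspace J))" and \<epsilon>: "\<epsilon> > 0"
  have \<eta>X: "\<eta> \<in> X2 J" and \<eta>r: "\<eta> \<in> rAbidual J" and \<eta>1: "nrm (dual (dual (Aspace J))) \<eta> \<le> 1"
    using \<eta> by (auto simp: rAbidual_def)
  have Ffin: "finite F" and FD: "F \<subseteq> DA J" using F by auto
  have C0: "0 \<in> C" using rA_zero[of J] by (simp add: C_def)
  show "\<exists>d\<in>canon (Aspace J) ` {x \<in> rA J. norm x \<le> 1}. \<forall>x\<in>F. cmod (d x - \<eta> x) < \<epsilon>"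
  proof (rule ccontr)
    assume "\<not> ?thesis"
    then have far: "\<exists>f\<in>F. \<epsilon> \<le> cmod (f c - \<eta> f)" if "c \<in> C" for c
      using that FD canon_A[of _ J c] unfolding C_def by (force simp: not_less)
    \<comment> \<open>Step 1: separation in a function space\<close>
    define T where "T c = (\<lambda>f. if f \<in> F then f c - \<eta> f else 0)" for c
    define K where "K = T ` C"
    define N where "N v = (\<Sum>f\<in>F. cmod (v f))" for v :: "('a \<Rightarrow> complex) \<Rightarrow> complex"
    have Tlin: "u *\<^sub>R T c1 + v *\<^sub>R T c2 = T (u *\<^sub>R c1 + v *\<^sub>R c2)" if "u + v = 1" for u v c1 c2
    proof
      fix f show "(u *\<^sub>R T c1 + v *\<^sub>R T c2) f = T (u *\<^sub>R c1 + v *\<^sub>R c2) f"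
      proof (cases "f \<in> F")
        case True
        then have fD: "f \<in> DA J" using FD by auto
        have "\<eta> f = complex_of_real u * \<eta> f + complex_of_real v * \<eta> f"
          using that by (metis distrib_right mult_1 of_real_1 of_real_add)
        then show ?thesis using True
          by (simp add: T_def dualA_add[OF fD] dualA_scaleR[OF fD] scaleR_conv_of_real algebra_simps)
      qed (simp add: T_def)
    qed
    have Cconv: "u *\<^sub>R c1 + v *\<^sub>R c2 \<in> C" if "c1 \<in> C" "c2 \<in> C" "u \<ge> 0" "v \<ge> 0" "u + v = 1" for u v c1 c2
    proof -
      have "u *\<^sub>R c1 + v *\<^sub>R c2 \<in> rA J" using that by (auto simp: C_def intro!: rA_add rA_scale)
      moreover have "norm (u *\<^sub>R c1 + v *\<^sub>R c2) \<le> 1"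
      proof -
        have "norm (u *\<^sub>R c1 + v *\<^sub>R c2) \<le> u * norm c1 + v * norm c2"
          using norm_triangle_ineq[of "u *\<^sub>R c1" "v *\<^sub>R c2"] that by simp
        also have "\<dots> \<le> u * 1 + v * 1"
          using that by (intro add_mono mult_left_mono) (auto simp: C_def)
        finally show ?thesis using that by simp
      qed
      ultimately show ?thesis by (simp add: C_def)
    qed
    have cK: "convex K" unfolding K_def
    proof (rule convexI)
      fix x y and u v :: real assume "x \<in> T ` C" "y \<in> T ` C" and uv: "0 \<le> u" "0 \<le> v" "u + v = 1"
      then obtain c1 c2 where "c1 \<in> C" "c2 \<in> C" "x = T c1" "y = T c2" by auto
      then show "u *\<^sub>R x + v *\<^sub>R y \<in> T ` C" using Tlin Cconv uv by auto
    qed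
    have neK: "K \<noteq> {}" using C0 K_def by auto
    have Nsub: "N (x + y) \<le> N x + N y" for x y
      unfolding N_def sum.distrib[symmetric] by (rule sum_mono) (simp add: norm_triangle_ineq)
    have Nhom: "N (r *\<^sub>R x) = \<bar>r\<bar> * N x" for r x
      unfolding N_def by (simp add: sum_distrib_left)
    have Kd: "\<epsilon> \<le> N k" if kK: "k \<in> K" for k
    proof -
      obtain c where c: "c \<in> C" "k = T c" using kK unfolding K_def by auto
      obtain f where f: "f \<in> F" "\<epsilon> \<le> cmod (f c - \<eta> f)" using far[OF c(1)] by auto
      have "cmod (k f) \<le> N k" unfolding N_def by (rule member_le_sum) (use f Ffin in auto)
      then show ?thesis using f c by (simp add: T_def)
    qed
    obtain l where l: "linear l" "\<And>v. l v \<le> N v" "\<And>k. k \<in> K \<Longrightarrow> l k \<le> - \<epsilon>"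
      using separation[of K N \<epsilon>, OF cK neK Nsub Nhom \<epsilon> Kd] by blast
    define w where "w f = Complex (l (\<lambda>j. if j = f then 1 else 0)) (l (\<lambda>j. if j = f then \<i> else 0))" for f
    define \<phi> where "\<phi> = (\<lambda>x. \<Sum>f\<in>F. cnj (w f) * f x)"
    have \<phi>D: "\<phi> \<in> DA J" and \<eta>\<phi>: "\<eta> \<phi> = (\<Sum>f\<in>F. cnj (w f) * \<eta> f)"
      using bidual_sum[OF \<eta>X Ffin FD, of "\<lambda>f. cnj (w f)"] unfolding \<phi>_def by auto
    have lT: "l (T c) = Re (\<phi> c) - Re (\<eta> \<phi>)" for c
    proof -
      have "l (T c) = (\<Sum>f\<in>F. l (\<lambda>j. if j = f then T c f else 0))"
        by (rule lin_decomp[OF l(1) Ffin]) (simp add: T_def)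
      also have "\<dots> = (\<Sum>f\<in>F. Re (cnj (w f) * (f c - \<eta> f)))"
      proof (rule sum.cong)
        fix f assume "f \<in> F"
        then have Tf: "T c f = f c - \<eta> f" by (simp add: T_def)
        show "l (\<lambda>j. if j = f then T c f else 0) = Re (cnj (w f) * (f c - \<eta> f))"
          unfolding Tf w_def by (rule lin_coord_complex[OF l(1)])
      qed simp
      also have "\<dots> = Re (\<phi> c) - Re (\<Sum>f\<in>F. cnj (w f) * \<eta> f)"
        unfolding \<phi>_def by (simp add: sum_subtractf right_diff_distrib)
      also have "\<dots> = Re (\<phi> c) - Re (\<eta> \<phi>)" using \<eta>\<phi> by simp
      finally show ?thesis .
    qed
    define \<beta> where "\<beta> = Re (\<eta> \<phi>) - \<epsilon>"
    have \<phi>C: "Re (\<phi> c) \<le> \<beta>" if "c \<in> C" for c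
      using l(3)[of "T c"] that lT[of c] K_def \<beta>_def by auto
    have \<beta>0: "\<beta> \<ge> 0" using \<phi>C[OF C0] dualA_zero[OF \<phi>D] by simp
    have cone: "Re (\<phi> c) \<le> \<beta> * norm c" if c: "c \<in> rA J" for c
    proof (cases "c = 0")
      case True then show ?thesis using dualA_zero[OF \<phi>D] by simp
    next
      case False
      define c' where "c' = (1 / norm c) *\<^sub>R c"
      have "c' \<in> C" using False c rA_scale[OF c, of "1 / norm c"] by (simp add: C_def c'_def)
      then have "Re (\<phi> c') \<le> \<beta>" by (rule \<phi>C)
      moreover have "\<phi> c' = complex_of_real (1 / norm c) * \<phi> c"
        unfolding c'_def by (rule dualA_scaleR[OF \<phi>D])
      ultimately have "Re (\<phi> c) / norm c \<le> \<beta>" by simp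
      then show ?thesis using False by (simp add: field_simps)
    qed
    obtain l2 where l2: "linear l2" "\<And>v. l2 v \<le> \<beta> * norm v" "\<And>c. c \<in> rA J \<Longrightarrow> Re (\<phi> c) \<le> l2 c"
    proof -
      have "\<exists>l. linear l \<and> (\<forall>v. l v \<le> \<beta> * norm v) \<and> (\<forall>c\<in>rA J. Re (\<phi> c) \<le> l c)"
      proof (rule cone_HB)
        show "\<beta> * norm (x + y) \<le> \<beta> * norm x + \<beta> * norm y" for x y :: 'a
          using mult_left_mono[OF norm_triangle_ineq \<beta>0] by (simp add: distrib_left)
        show "\<beta> * norm (r *\<^sub>R x) = \<bar>r\<bar> * (\<beta> * norm x)" for r x by simp
      qed (use rA_zero rA_add rA_scale dualA_real_linear[OF \<phi>D] cone in auto)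
      then show ?thesis using that by blast
    qed
    define g where "g = (\<lambda>x. Complex (l2 x) (- l2 (J x)))"
    have gD: "g \<in> DA J" and gRe: "\<And>x. Re (g x) = l2 x" and gb: "\<And>x. cmod (g x) \<le> \<beta> * norm x"
      using complexify[OF cs l2(1) l2(2)] unfolding g_def by auto
    define \<psi> where "\<psi> = (\<lambda>x. \<phi> x + (-1) * g x)"
    have mgD: "(\<lambda>x. (-1) * g x) \<in> DA J" by (rule dualA_smulf[OF gD])
    have \<psi>D: "\<psi> \<in> DA J" unfolding \<psi>_def by (rule dualA_addf[OF \<phi>D mgD])
    have \<eta>\<psi>: "\<eta> \<psi> = \<eta> \<phi> - \<eta> g"
      unfolding \<psi>_def using bidual_add[OF \<eta>X \<phi>D mgD] bidual_smul[OF \<eta>X gD, of "-1"] by simp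
    have \<psi>neg: "Re (\<psi> c) \<le> 0" if "c \<in> rA J" for c
      using l2(3)[OF that] gRe[of c] by (simp add: \<psi>_def)
    have Re\<eta>\<psi>: "Re (\<eta> \<psi>) \<le> 0"
    proof (rule ccontr)
      assume "\<not> Re (\<eta> \<psi>) \<le> 0"
      then have pos: "Re (\<eta> \<psi>) > 0" by simp
      have fin: "finite {\<psi>} \<and> {\<psi>} \<subseteq> DA J" using \<psi>D by simp
      have W: "\<And>F e. finite F \<and> F \<subseteq> DA J \<Longrightarrow> e > 0 \<Longrightarrow>
          \<exists>d\<in>canon (Aspace J) ` rA J. \<forall>x\<in>F. cmod (d x - \<eta> x) < e"
        using h3 \<eta>r unfolding wstar_dense_def by blast
      obtain d where d: "d \<in> canon (Aspace J) ` rA J" "\<forall>x\<in>{\<psi>}. cmod (d x - \<eta> x) < Re (\<eta> \<psi>)"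
        using W[OF fin pos] by blast
      have d2: "cmod (d \<psi> - \<eta> \<psi>) < Re (\<eta> \<psi>)" using d(2) by simp
      obtain c where c: "c \<in> rA J" "d = canon (Aspace J) c" using d(1) by auto
      have "d \<psi> = \<psi> c" using c(2) canon_A[OF \<psi>D] by simp
      then have "cmod (\<psi> c - \<eta> \<psi>) < Re (\<eta> \<psi>)" using d2 by simp
      moreover have "Re (\<eta> \<psi>) - Re (\<psi> c) \<le> cmod (\<psi> c - \<eta> \<psi>)"
        using complex_Re_le_cmod[of "\<eta> \<psi> - \<psi> c"] by (simp add: norm_minus_commute)
      ultimately show False using \<psi>neg[OF c(1)] by simp
    qed
    define \<gamma> where "\<gamma> = \<beta> + \<epsilon> / 2"
    have \<gamma>: "\<gamma> > 0" using \<beta>0 \<epsilon> \<gamma>_def by simp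
    define g' where "g' = (\<lambda>x. complex_of_real (1 / \<gamma>) * g x)"
    have g'D: "g' \<in> DA J" unfolding g'_def by (rule dualA_smulf[OF gD])
    have g'b: "cmod (g' x) \<le> 1 * norm x" for x
    proof -
      have "cmod (g' x) = (1 / \<gamma>) * cmod (g x)" using \<gamma> by (simp add: g'_def norm_mult norm_divide)
      also have "\<dots> \<le> (1 / \<gamma>) * (\<beta> * norm x)" using gb[of x] \<gamma> by (simp add: divide_right_mono)
      also have "\<dots> \<le> 1 * norm x" using \<gamma> \<beta>0 \<epsilon> by (simp add: \<gamma>_def field_simps)
      finally show ?thesis .
    qed
    have "nrm (dual (Aspace J)) g' \<le> 1" by (rule nrm_dualA_le[OF g'b]) simp
    then have \<eta>g': "cmod (\<eta> g') \<le> 1" using bidual_upper[OF \<eta>X g'D] \<eta>1 by simp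
    have "g = (\<lambda>x. complex_of_real \<gamma> * g' x)" using \<gamma> by (simp add: g'_def fun_eq_iff)
    then have "\<eta> g = complex_of_real \<gamma> * \<eta> g'" using bidual_smul[OF \<eta>X g'D] by simp
    then have "cmod (\<eta> g) \<le> \<gamma>" using \<eta>g' \<gamma> by (simp add: norm_mult mult_left_le)
    then have "Re (\<eta> g) \<le> \<gamma>" using complex_Re_le_cmod[of "\<eta> g"] by simp
    then have "Re (\<eta> \<phi>) \<le> \<gamma>" using Re\<eta>\<psi> \<eta>\<psi> by simp
    then show False using \<beta>_def \<gamma>_def \<epsilon> by simp
  qed
qed

lemma canon_X2:
  fixes J :: "'a::real_normed_algebra \<Rightarrow> 'a"
  shows "canon (Aspace J) a \<in> X2 J"
  unfolding bidual_iff
proof (intro conjI ballI allI impI)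
  fix f g assume f: "f \<in> DA J" and g: "g \<in> DA J"
  show "canon (Aspace J) a (\<lambda>x. f x + g x) = canon (Aspace J) a f + canon (Aspace J) a g"
    using dualA_addf[OF f g] f g by (simp add: canon_A)
next
  fix c f assume f: "f \<in> DA J"
  show "canon (Aspace J) a (\<lambda>x. c * f x) = c * canon (Aspace J) a f"
    using dualA_smulf[OF f] f by (simp add: canon_A)
next
  show "\<exists>K. \<forall>f\<in>DA J. cmod (canon (Aspace J) a f) \<le> K * nrm (dual (Aspace J)) f"
  proof (intro exI[of _ "norm a"] ballI)
    fix f assume f: "f \<in> DA J"
    show "cmod (canon (Aspace J) a f) \<le> norm a * nrm (dual (Aspace J)) f"
      using dualA_nrm_bound[OF f, of a] canon_A[OF f, of a] by (simp add: mult.commute)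
  qed
next
  fix f assume "f \<notin> DA J"
  then show "canon (Aspace J) a f = 0" by (simp add: canon_def)
qed

lemma mult_dual:
  fixes J :: "'a::real_normed_algebra \<Rightarrow> 'a"
  assumes cs: "complex_structure J" and f: "f \<in> DA J"
  shows "(\<lambda>x. f (x * a)) \<in> DA J" "(\<lambda>x. f (a * x)) \<in> DA J"
    "\<exists>K\<ge>0. \<forall>x. cmod (f (x * a)) \<le> K * norm a * norm x \<and> cmod (f (a * x)) \<le> K * norm a * norm x"
proof -
  obtain K where K: "K \<ge> 0" "\<And>x. cmod (f x) \<le> K * norm x" using dualA_bound[OF f] by auto
  have b1: "cmod (f (x * a)) \<le> K * norm a * norm x" for x
  proof -
    have "cmod (f (x * a)) \<le> K * norm (x * a)" by (rule K(2))
    also have "\<dots> \<le> K * (norm x * norm a)" by (rule mult_left_mono[OF norm_mult_ineq K(1)])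
    finally show ?thesis by (simp add: algebra_simps)
  qed
  have b2: "cmod (f (a * x)) \<le> K * norm a * norm x" for x
  proof -
    have "cmod (f (a * x)) \<le> K * norm (a * x)" by (rule K(2))
    also have "\<dots> \<le> K * (norm a * norm x)" by (rule mult_left_mono[OF norm_mult_ineq K(1)])
    finally show ?thesis by (simp add: algebra_simps)
  qed
  have cr: "cscale J c x * a = cscale J c (x * a)" for c x
    unfolding cscale_def using cs_props(4)[OF cs, of x a] by (simp add: distrib_right)
  have cl: "a * cscale J c x = cscale J c (a * x)" for c x
    unfolding cscale_def using cs_props(5)[OF cs, of a x] by (simp add: distrib_left)
  show "(\<lambda>x. f (x * a)) \<in> DA J"
    by (rule dualA_I[of _ J "K * norm a"]) (simp_all add: distrib_right dualA_add[OF f] cr dualA_cscale[OF f] b1)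
  show "(\<lambda>x. f (a * x)) \<in> DA J"
    by (rule dualA_I[of _ J "K * norm a"]) (simp_all add: distrib_left dualA_add[OF f] cl dualA_cscale[OF f] b2)
  show "\<exists>K\<ge>0. \<forall>x. cmod (f (x * a)) \<le> K * norm a * norm x \<and> cmod (f (a * x)) \<le> K * norm a * norm x"
    using K(1) b1 b2 by blast
qed

lemma bidual_bound_abs:
  assumes "\<Phi> \<in> X2 J"
  shows "\<exists>K\<ge>0. \<forall>f\<in>DA J. cmod (\<Phi> f) \<le> K * nrm (dual (Aspace J)) f"
proof -
  obtain K where K: "\<forall>f\<in>DA J. cmod (\<Phi> f) \<le> K * nrm (dual (Aspace J)) f"
    using assms unfolding bidual_iff by blast
  have "cmod (\<Phi> f) \<le> \<bar>K\<bar> * nrm (dual (Aspace J)) f" if "f \<in> DA J" for f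
    using order_trans[OF K[rule_format, OF that] mult_right_mono[OF abs_ge_self nrm_dualA_ge0[OF that]]] .
  then show ?thesis by (intro exI[of _ "\<bar>K\<bar>"]) auto
qed

lemma mixed_eval:
  fixes J :: "'a::real_normed_algebra \<Rightarrow> 'a"
  assumes cs: "complex_structure J" and E: "mixed_identity J E" and f: "f \<in> DA J"
  shows "E (\<lambda>b. f (b * a)) = f a" "E (\<lambda>b. f (a * b)) = f a"
proof -
  have EX: "E \<in> X2 J" using E by (simp add: mixed_identity_def)
  obtain KE where KE: "KE \<ge> 0" "\<And>g. g \<in> DA J \<Longrightarrow> cmod (E g) \<le> KE * nrm (dual (Aspace J)) g"
    using bidual_bound_abs[OF EX] by blast
  obtain Kf where Kf0: "Kf \<ge> 0" and Kfb: "\<And>x. cmod (f x) \<le> Kf * norm x"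
    using dualA_bound[OF f] by auto
  have Kf: "Kf \<ge> 0" "\<And>a x. cmod (f (x * a)) \<le> Kf * norm a * norm x"
    "\<And>a x. cmod (f (a * x)) \<le> Kf * norm a * norm x"
  proof -
    show "Kf \<ge> 0" by (rule Kf0)
    fix a x :: 'a
    have "cmod (f (x * a)) \<le> Kf * (norm x * norm a)"
      using order_trans[OF Kfb[of "x * a"] mult_left_mono[OF norm_mult_ineq Kf0]] .
    then show "cmod (f (x * a)) \<le> Kf * norm a * norm x" by (simp add: algebra_simps)
    have "cmod (f (a * x)) \<le> Kf * (norm a * norm x)"
      using order_trans[OF Kfb[of "a * x"] mult_left_mono[OF norm_mult_ineq Kf0]] .
    then show "cmod (f (a * x)) \<le> Kf * norm a * norm x" by (simp add: algebra_simps)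
  qed
  have hb: "cmod (E g) \<le> (KE * Kf) * norm a'" if "g \<in> DA J" "\<And>x. cmod (g x) \<le> Kf * norm a' * norm x"
    for g a'
  proof -
    have "nrm (dual (Aspace J)) g \<le> Kf * norm a'"
      by (rule nrm_dualA_le) (use that Kf(1) in auto)
    then have "KE * nrm (dual (Aspace J)) g \<le> KE * (Kf * norm a')" by (rule mult_left_mono[OF _ KE(1)])
    then show ?thesis using KE(2)[OF that(1)] by (simp add: mult.assoc)
  qed
  define h2 where "h2 = (\<lambda>a'. E (\<lambda>b. f (b * a')))"
  have h2D: "h2 \<in> DA J"
  proof (rule dualA_I[of _ J "KE * Kf"])
    fix x y
    have "(\<lambda>b. f (b * (x + y))) = (\<lambda>b. f (b * x) + f (b * y))"
      by (simp add: distrib_left dualA_add[OF f])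
    then show "h2 (x + y) = h2 x + h2 y"
      unfolding h2_def using bidual_add[OF EX mult_dual(1)[OF cs f, of x] mult_dual(1)[OF cs f, of y]] by simp
  next
    fix c x
    have "(\<lambda>b. f (b * cscale J c x)) = (\<lambda>b. c * f (b * x))"
    proof
      fix b have "b * cscale J c x = cscale J c (b * x)"
        unfolding cscale_def using cs_props(5)[OF cs, of b x] by (simp add: distrib_left)
      then show "f (b * cscale J c x) = c * f (b * x)" by (simp add: dualA_cscale[OF f])
    qed
    then show "h2 (cscale J c x) = c * h2 x"
      unfolding h2_def using bidual_smul[OF EX mult_dual(1)[OF cs f, of x]] by simp
  next
    fix x show "cmod (h2 x) \<le> KE * Kf * norm x"
      unfolding h2_def by (rule hb[OF mult_dual(1)[OF cs f]]) (use Kf(2) in auto)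
  qed
  have "arens2 J E (canon (Aspace J) a) f = canon (Aspace J) a f"
    using E canon_X2[of J a] by (simp add: mixed_identity_def)
  then show "E (\<lambda>b. f (b * a)) = f a"
    using f h2D by (simp add: arens2_def canon_A h2_def)
  define h1 where "h1 = (\<lambda>a'. E (\<lambda>b. f (a' * b)))"
  have h1D: "h1 \<in> DA J"
  proof (rule dualA_I[of _ J "KE * Kf"])
    fix x y
    have "(\<lambda>b. f ((x + y) * b)) = (\<lambda>b. f (x * b) + f (y * b))"
      by (simp add: distrib_right dualA_add[OF f])
    then show "h1 (x + y) = h1 x + h1 y"
      unfolding h1_def using bidual_add[OF EX mult_dual(2)[OF cs f, of x] mult_dual(2)[OF cs f, of y]] by simp
  next
    fix c x
    have "(\<lambda>b. f (cscale J c x * b)) = (\<lambda>b. c * f (x * b))"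
    proof
      fix b have "cscale J c x * b = cscale J c (x * b)"
        unfolding cscale_def using cs_props(4)[OF cs, of x b] by (simp add: distrib_right)
      then show "f (cscale J c x * b) = c * f (x * b)" by (simp add: dualA_cscale[OF f])
    qed
    then show "h1 (cscale J c x) = c * h1 x"
      unfolding h1_def using bidual_smul[OF EX mult_dual(2)[OF cs f, of x]] by simp
  next
    fix x show "cmod (h1 x) \<le> KE * Kf * norm x"
      unfolding h1_def by (rule hb[OF mult_dual(2)[OF cs f]]) (use Kf(3) in auto)
  qed
  have "arens1 J (canon (Aspace J) a) E f = canon (Aspace J) a f"
    using E canon_X2[of J a] by (simp add: mixed_identity_def)
  then show "E (\<lambda>b. f (a * b)) = f a"
    using f h1D by (simp add: arens1_def canon_A h1_def)
qed

lemma C_conv: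
  fixes J :: "'a::real_normed_algebra \<Rightarrow> 'a"
  assumes "c1 \<in> {x \<in> rA J. norm x \<le> 1}" "c2 \<in> {x \<in> rA J. norm x \<le> 1}" "u \<ge> 0" "v \<ge> 0" "u + v = 1"
  shows "u *\<^sub>R c1 + v *\<^sub>R c2 \<in> {x \<in> rA J. norm x \<le> 1}"
proof -
  have "u *\<^sub>R c1 + v *\<^sub>R c2 \<in> rA J" using assms by (auto intro!: rA_add rA_scale)
  moreover have "norm (u *\<^sub>R c1 + v *\<^sub>R c2) \<le> 1"
  proof -
    have "norm (u *\<^sub>R c1 + v *\<^sub>R c2) \<le> u * norm c1 + v * norm c2"
      using norm_triangle_ineq[of "u *\<^sub>R c1" "v *\<^sub>R c2"] assms by simp
    also have "\<dots> \<le> u * 1 + v * 1"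
      using assms by (intro add_mono mult_left_mono) auto
    finally show ?thesis using assms by simp
  qed
  ultimately show ?thesis by simp
qed

lemma part2_claim:
  fixes J :: "'a::{real_normed_algebra, banach} \<Rightarrow> 'a"
  assumes cs: "complex_structure J"
    and dens: "wstar_dense (dual (Aspace J))
           (canon (Aspace J) ` {x \<in> rA J. norm x \<le> 1})
           {\<eta> \<in> rAbidual J. nrm (dual (dual (Aspace J))) \<eta> \<le> 1}"
    and Er: "E \<in> rAbidual J" and Em: "mixed_identity J E" and En: "nrm (dual (dual (Aspace J))) E = 1"
    and S: "finite S" and \<delta>: "\<delta> > 0"
  shows "\<exists>c\<in>{x \<in> rA J. norm x \<le> 1}. \<forall>a\<in>S. norm (c * a - a) < \<delta> \<and> norm (a * c - a) < \<delta>"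
proof (rule ccontr)
  define C where "C = {x \<in> rA J. norm x \<le> 1}"
  assume "\<not> ?thesis"
  then have far: "\<exists>a\<in>S. \<delta> \<le> norm (c * a - a) \<or> \<delta> \<le> norm (a * c - a)" if "c \<in> C" for c
    using that unfolding C_def by (force simp: not_less)
  define I where "I = (UNIV :: bool set) \<times> S"
  have Ifin: "finite I" using S by (simp add: I_def)
  define T where "T c = (\<lambda>i. if snd i \<in> S then (if fst i then c * snd i - snd i else snd i * c - snd i) else 0)"
    for c :: 'a
  define K where "K = T ` C"
  define N where "N w = (\<Sum>i\<in>I. norm (w i))" for w :: "bool \<times> 'a \<Rightarrow> 'a"
  have C0: "0 \<in> C" using rA_zero[of J] by (simp add: C_def)
  have Tlin: "u *\<^sub>R T c1 + v *\<^sub>R T c2 = T (u *\<^sub>R c1 + v *\<^sub>R c2)" if uv: "u + v = 1" for u v c1 c2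
  proof
    fix i
    obtain b :: bool and x :: 'a where i: "i = (b, x)" by (cases i)
    have xx: "x = u *\<^sub>R x + v *\<^sub>R x" using uv by (metis scaleR_add_left scaleR_one)
    have e1: "u *\<^sub>R (c1 * x - x) + v *\<^sub>R (c2 * x - x) = (u *\<^sub>R c1 + v *\<^sub>R c2) * x - (u *\<^sub>R x + v *\<^sub>R x)"
      by (simp add: algebra_simps)
    have e2: "u *\<^sub>R (x * c1 - x) + v *\<^sub>R (x * c2 - x) = x * (u *\<^sub>R c1 + v *\<^sub>R c2) - (u *\<^sub>R x + v *\<^sub>R x)"
      by (simp add: algebra_simps)
    show "(u *\<^sub>R T c1 + v *\<^sub>R T c2) i = T (u *\<^sub>R c1 + v *\<^sub>R c2) i"
      unfolding i T_def using e1 e2 xx[symmetric] by simp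
  qed
  have cK: "convex K" unfolding K_def
  proof (rule convexI)
    fix x y and u v :: real assume "x \<in> T ` C" "y \<in> T ` C" and uv: "0 \<le> u" "0 \<le> v" "u + v = 1"
    then obtain c1 c2 where "c1 \<in> C" "c2 \<in> C" "x = T c1" "y = T c2" by auto
    moreover have "u *\<^sub>R c1 + v *\<^sub>R c2 \<in> C"
      using C_conv[of c1 J c2 u v] uv \<open>c1 \<in> C\<close> \<open>c2 \<in> C\<close> unfolding C_def by blast
    ultimately show "u *\<^sub>R x + v *\<^sub>R y \<in> T ` C" using Tlin[OF uv(3)] by auto
  qed
  have neK: "K \<noteq> {}" using C0 K_def by auto
  have Nsub: "N (x + y) \<le> N x + N y" for x y
    unfolding N_def sum.distrib[symmetric] by (rule sum_mono) (simp add: norm_triangle_ineq)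
  have Nhom: "N (r *\<^sub>R x) = \<bar>r\<bar> * N x" for r x
    unfolding N_def by (simp add: sum_distrib_left)
  have Kd: "\<delta> \<le> N k" if kK: "k \<in> K" for k
  proof -
    obtain c where c: "c \<in> C" "k = T c" using kK unfolding K_def by auto
    obtain a where a: "a \<in> S" "\<delta> \<le> norm (c * a - a) \<or> \<delta> \<le> norm (a * c - a)" using far[OF c(1)] by auto
    have "norm (k (True, a)) \<le> N k" unfolding N_def by (rule member_le_sum) (use a Ifin I_def in auto)
    moreover have "norm (k (False, a)) \<le> N k" unfolding N_def by (rule member_le_sum) (use a Ifin I_def in auto)
    ultimately show ?thesis using a c by (auto simp: T_def)
  qed
  obtain l where l: "linear l" "\<And>v. l v \<le> N v" "\<And>k. k \<in> K \<Longrightarrow> l k \<le> - \<delta>"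
    using separation[of K N \<delta>, OF cK neK Nsub Nhom \<delta> Kd] by blast
  define li where "li i y = l (\<lambda>j. if j = i then y else 0)" for i y
  have lilin: "linear (li i)" for i
  proof (rule linearI)
    fix x y :: 'a
    have "(\<lambda>j. if j = i then x + y else 0) = (\<lambda>j. if j = i then x else 0) + (\<lambda>j. if j = i then y else 0)"
      by (auto simp: fun_eq_iff)
    then show "li i (x + y) = li i x + li i y" unfolding li_def by (simp add: linear_add[OF l(1)])
  next
    fix r and x :: 'a
    have "(\<lambda>j. if j = i then r *\<^sub>R x else 0) = r *\<^sub>R (\<lambda>j. if j = i then x else 0)"
      by (auto simp: fun_eq_iff)
    then show "li i (r *\<^sub>R x) = r *\<^sub>R li i x" unfolding li_def by (simp add: linear_scale[OF l(1)])
  qed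
  have libnd: "li i y \<le> 1 * norm y" for i y
  proof -
    have "li i y \<le> N (\<lambda>j. if j = i then y else 0)" unfolding li_def by (rule l(2))
    also have "N (\<lambda>j. if j = i then y else 0) = (\<Sum>j\<in>I. if j = i then norm y else 0)"
      unfolding N_def by (rule sum.cong) auto
    also have "\<dots> \<le> norm y" using Ifin by (simp add: sum.delta')
    finally show ?thesis by simp
  qed
  define g where "g i = (\<lambda>x. Complex (li i x) (- li i (J x)))" for i
  have gD: "g i \<in> DA J" and gRe: "Re (g i x) = li i x" for i x
    using complexify[OF cs lilin libnd] unfolding g_def by auto
  have lT: "l (T c) = (\<Sum>i\<in>I. li i (T c i))" for c
    unfolding li_def by (rule lin_decomp[OF l(1) Ifin]) (auto simp: T_def I_def)
  define fi where "fi i = (if fst i then (\<lambda>y. g i (y * snd i)) else (\<lambda>y. g i (snd i * y)))" for i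
  have fiD: "fi i \<in> DA J" for i
    unfolding fi_def using mult_dual(1,2)[OF cs gD] by simp
  have fiE: "E (fi i) = g i (snd i)" for i
    unfolding fi_def using mixed_eval[OF cs Em gD] by simp
  define \<delta>' where "\<delta>' = \<delta> / (real (card I) + 1)"
  have \<delta>': "\<delta>' > 0" using \<delta> by (simp add: \<delta>'_def add_pos_nonneg)
  have W: "\<And>F e. finite F \<and> F \<subseteq> DA J \<Longrightarrow> e > 0 \<Longrightarrow>
      \<exists>d\<in>canon (Aspace J) ` C. \<forall>x\<in>F. cmod (d x - E x) < e"
    using dens Er En unfolding wstar_dense_def C_def by auto
  have fin: "finite (fi ` I) \<and> fi ` I \<subseteq> DA J" using Ifin fiD by auto
  obtain d where d: "d \<in> canon (Aspace J) ` C" "\<forall>x\<in>fi ` I. cmod (d x - E x) < \<delta>'"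
    using W[OF fin \<delta>'] by blast
  obtain c where c: "c \<in> C" "d = canon (Aspace J) c" using d(1) by auto
  have trm: "- \<delta>' \<le> li i (T c i)" if iI: "i \<in> I" for i
  proof -
    obtain b :: bool and x :: 'a where i: "i = (b, x)" by (cases i)
    have xS: "x \<in> S" using iI i I_def by auto
    have "cmod (fi i c - g i x) < \<delta>'"
      using d(2) iI c(2) canon_A[OF fiD[of i], of c] fiE[of i] i by auto
    moreover have "fi i c - g i x = g i (T c i)"
      unfolding fi_def T_def i using xS by (simp add: dualA_diff[OF gD])
    ultimately have "cmod (g i (T c i)) < \<delta>'" by simp
    then have "- \<delta>' \<le> Re (g i (T c i))"
      using abs_Re_le_cmod[of "g i (T c i)"] by linarith
    then show ?thesis using gRe by simp
  qed
  have "- (real (card I) * \<delta>') \<le> l (T c)"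
  proof -
    have "(\<Sum>i\<in>I. - \<delta>') \<le> (\<Sum>i\<in>I. li i (T c i))" by (rule sum_mono) (use trm in auto)
    then show ?thesis using lT[of c] by simp
  qed
  moreover have "real (card I) * \<delta>' < \<delta>"
  proof -
    have "real (card I) * \<delta>' = \<delta> * (real (card I) / (real (card I) + 1))"
      by (simp add: \<delta>'_def)
    also have "\<dots> < \<delta> * 1" using \<delta> by (intro mult_strict_left_mono) auto
    finally show ?thesis by simp
  qed
  moreover have "l (T c) \<le> - \<delta>" using l(3)[of "T c"] c(1) K_def by auto
  ultimately show False by simp
qed

theorem proposition6p4:
  fixes J :: "'a::{real_normed_algebra, banach} \<Rightarrow> 'a"
  assumes "complex_structure J"
    and "approx_unital TYPE('a)"
    and "wstar_dense (dual (Aspace J)) (canon (Aspace J) ` rA J) (rAbidual J)"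
  shows "wstar_dense (dual (Aspace J))
           (canon (Aspace J) ` {x \<in> rA J. norm x \<le> 1})
           {\<eta> \<in> rAbidual J. nrm (dual (dual (Aspace J))) \<eta> \<le> 1}
         \<and> ((\<exists>E\<in>rAbidual J. mixed_identity J E \<and> nrm (dual (dual (Aspace J))) E = 1) \<longrightarrow>
         (\<exists>F :: 'a filter. F \<noteq> bot \<and> eventually (\<lambda>x. x \<in> rA J \<and> norm x \<le> 1) F \<and>
            (\<forall>a. ((\<lambda>x. x * a) \<longlongrightarrow> a) F \<and> ((\<lambda>x. a * x) \<longlongrightarrow> a) F)))"
proof (intro conjI impI)
  have cs: "complex_structure J" by (rule assms(1))
  show dens: "wstar_dense (dual (Aspace J))
           (canon (Aspace J) ` {x \<in> rA J. norm x \<le> 1})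
           {\<eta> \<in> rAbidual J. nrm (dual (dual (Aspace J))) \<eta> \<le> 1}"
    by (rule part1[OF cs assms(3)])
  assume "\<exists>E\<in>rAbidual J. mixed_identity J E \<and> nrm (dual (dual (Aspace J))) E = 1"
  then obtain E where E: "E \<in> rAbidual J" "mixed_identity J E" "nrm (dual (dual (Aspace J))) E = 1"
    by blast
  define ST where "ST S n = {c \<in> rA J. norm c \<le> 1 \<and>
      (\<forall>a\<in>S. norm (c * a - a) < 1 / real (Suc n) \<and> norm (a * c - a) < 1 / real (Suc n))}"
    for S :: "'a set" and n :: nat
  define Idx where "Idx = {(S :: 'a set, n :: nat). finite S}"
  define Fl where "Fl = (INF i\<in>Idx. principal (ST (fst i) (snd i)))"
  have STne: "ST S n \<noteq> {}" if "finite S" for S n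
  proof -
    have "(1 / real (Suc n)) > 0" by simp
    from part2_claim[OF cs dens E(1) E(2) E(3) that this]
    obtain c where "c \<in> {x \<in> rA J. norm x \<le> 1}"
      "\<forall>a\<in>S. norm (c * a - a) < 1 / real (Suc n) \<and> norm (a * c - a) < 1 / real (Suc n)" by blast
    then show ?thesis unfolding ST_def by blast
  qed
  have STmono: "ST (S1 \<union> S2) (max n1 n2) \<subseteq> ST S1 n1 \<inter> ST S2 n2" for S1 S2 n1 n2
  proof -
    have le1: "1 / real (Suc (max n1 n2)) \<le> 1 / real (Suc n1)"
      by (intro divide_left_mono) auto
    have le2: "1 / real (Suc (max n1 n2)) \<le> 1 / real (Suc n2)"
      by (intro divide_left_mono) auto
    show ?thesis
    proof (rule subsetI)
      fix c assume "c \<in> ST (S1 \<union> S2) (max n1 n2)"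
      then have c: "c \<in> rA J" "norm c \<le> 1"
        "\<And>a. a \<in> S1 \<union> S2 \<Longrightarrow> norm (c * a - a) < 1 / real (Suc (max n1 n2))"
        "\<And>a. a \<in> S1 \<union> S2 \<Longrightarrow> norm (a * c - a) < 1 / real (Suc (max n1 n2))"
        unfolding ST_def by blast+
      have "c \<in> ST S1 n1" unfolding ST_def
        using c less_le_trans[OF c(3) le1] less_le_trans[OF c(4) le1] by blast
      moreover have "c \<in> ST S2 n2" unfolding ST_def
        using c less_le_trans[OF c(3) le2] less_le_trans[OF c(4) le2] by blast
      ultimately show "c \<in> ST S1 n1 \<inter> ST S2 n2" by blast
    qed
  qed
  have dir: "\<exists>k\<in>Idx. principal (ST (fst k) (snd k)) \<le> inf (principal (ST (fst i) (snd i))) (principal (ST (fst j) (snd j)))"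
    if iI: "i \<in> Idx" and jI: "j \<in> Idx" for i j
  proof -
    obtain S1 n1 where i: "i = (S1, n1)" "finite S1" using iI unfolding Idx_def by auto
    obtain S2 n2 where j: "j = (S2, n2)" "finite S2" using jI unfolding Idx_def by auto
    have "(S1 \<union> S2, max n1 n2) \<in> Idx" using i j Idx_def by auto
    moreover have "principal (ST (S1 \<union> S2) (max n1 n2)) \<le> inf (principal (ST S1 n1)) (principal (ST S2 n2))"
      using STmono[of S1 S2 n1 n2] by (simp add: inf_principal)
    ultimately show ?thesis using i j by (intro bexI[of _ "(S1 \<union> S2, max n1 n2)"]) auto
  qed
  have "Fl \<noteq> bot"
  proof
    assume "Fl = bot"
    then obtain i where "i \<in> Idx" "principal (ST (fst i) (snd i)) = bot"
      unfolding Fl_def using INF_filter_bot_base[of Idx "\<lambda>i. principal (ST (fst i) (snd i))"] dir by blast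
    then show False using STne Idx_def by (auto simp: principal_eq_bot_iff)
  qed
  moreover have "eventually (\<lambda>x. x \<in> rA J \<and> norm x \<le> 1) Fl"
  proof -
    have "({}, 0) \<in> Idx" by (simp add: Idx_def)
    moreover have "eventually (\<lambda>x. x \<in> rA J \<and> norm x \<le> 1) (principal (ST {} 0))"
      by (simp add: eventually_principal ST_def)
    ultimately show ?thesis unfolding Fl_def
      by (metis (no_types, lifting) eventually_INF1 fst_conv snd_conv)
  qed
  moreover have "((\<lambda>x. x * a) \<longlongrightarrow> a) Fl \<and> ((\<lambda>x. a * x) \<longlongrightarrow> a) Fl" for a
  proof -
    have ev: "eventually (\<lambda>x. dist (x * a) a < e \<and> dist (a * x) a < e) Fl" if e: "e > 0" for e
    proof -
      obtain n where n: "1 / real (Suc n) < e" using e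
        by (metis nat_approx_posE)
      have "({a}, n) \<in> Idx" by (simp add: Idx_def)
      moreover have "eventually (\<lambda>x. dist (x * a) a < e \<and> dist (a * x) a < e) (principal (ST {a} n))"
        unfolding eventually_principal ST_def using n by (auto simp: dist_norm)
      ultimately show ?thesis unfolding Fl_def
        by (metis (no_types, lifting) eventually_INF1 fst_conv snd_conv)
    qed
    show ?thesis
      by (auto simp: tendsto_iff intro: eventually_mono[OF ev])
  qed
  ultimately show "\<exists>F :: 'a filter. F \<noteq> bot \<and> eventually (\<lambda>x. x \<in> rA J \<and> norm x \<le> 1) F \<and>
            (\<forall>a. ((\<lambda>x. x * a) \<longlongrightarrow> a) F \<and> ((\<lambda>x. a * x) \<longlongrightarrow> a) F)"
    by blast
qed

end
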